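(* Let $0<\varepsilon\le1$. For every $f\in\mathfrak M_{\varepsilon,0}$ one has $(h_\varepsilon S_\varepsilon-S_\varepsilon h_\varepsilon)f=-if$, and for every $f\in\mathfrak M_{\varepsilon,1}$ one has $(h_\varepsilon S^*_\varepsilon-S^*_\varepsilon h_\varepsilon)f=-if$ (all operator products being defined on these vectors).
   Context: Work in $L^2(\mathbb{R})$. Let $q$ be multiplication by $x$, $p=-i\,d/dx$, $t=q^{-1}p$ with $D(t)=\{f\in D(p):pf\in D(q^{-1})\}$, $t^*$ its adjoint; $L^2_0$, $L^2_1$ the even/odd subspaces. For $0<\varepsilon\le1$, $h_\varepsilon=\frac12(\varepsilon p^2+q^2)$ on $D(p^2)\cap D(q^2)$. Define $S_\varepsilon$ in $L^2_0$ by $D(S_\varepsilon)=\{f\in L^2_0\cap\bigcap_nD(t^{2n+1}):\sum_{n=0}^N\frac{(-1)^n}{2n+1}(\sqrt\varepsilon t)^{2n+1}f$ converges in norm$\}$, $S_\varepsilon f=-\varepsilon^{-1/2}\sum_{n\ge0}\frac{(-1)^n}{2n+1}(\sqrt\varepsilon t)^{2n+1}f$, and $S^*_\varepsilon$ (notation only) in $L^2_1$ by the same formulas with $t^*$ and $L^2_1$. $\mathfrak M_{\varepsilon,0}$ is the span of $\{x^{2n}e^{-\alpha x^2/(2\sqrt\varepsilon)}:n\ge0,\alpha\in(0,1)\}$ and $\mathfrak M_{\varepsilon,1}$ the span of $\{x^{2n+1}e^{-\alpha x^2/(2\sqrt\varepsilon)}:n\ge0,\alpha\in(0,1)\}$.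 *)

theory Defs
  imports "HOL-Analysis.Analysis"
begin

text \<open>Elements of L^2(R) are represented by measurable functions real => complex
  with square-integrable modulus; equality is almost-everywhere equality.
  (Unbounded) operators are represented by their graphs, as binary relations
  A f g meaning "f is in D(A) and A f = g (a.e.)".\<close>

type_synonym fn = "real \<Rightarrow> complex"
type_synonym oper = "fn \<Rightarrow> fn \<Rightarrow> bool"

definition L2 :: "fn \<Rightarrow> bool" where
  "L2 f \<longleftrightarrow> f \<in> borel_measurable lborel \<and> integrable lborel (\<lambda>x. (cmod (f x))\<^sup>2)"

definition L2norm :: "fn \<Rightarrow> real" where
  "L2norm f = sqrt (LINT x|lborel. (cmod (f x))\<^sup>2)"

definition L2inner :: "fn \<Rightarrow> fn \<Rightarrow> complex" where
  "L2inner f g = (LINT x|lborel. cnj (f x) * g x)"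

definition L2_even :: "fn \<Rightarrow> bool" where
  "L2_even f \<longleftrightarrow> L2 f \<and> (AE x in lborel. f (- x) = f x)"

definition L2_odd :: "fn \<Rightarrow> bool" where
  "L2_odd f \<longleftrightarrow> L2 f \<and> (AE x in lborel. f (- x) = - f x)"

definition test_fun :: "fn \<Rightarrow> fn \<Rightarrow> bool" where
  "test_fun \<phi> \<phi>' \<longleftrightarrow> (\<forall>x. (\<phi> has_vector_derivative \<phi>' x) (at x)) \<and>
     continuous_on UNIV \<phi>' \<and> (\<exists>R. \<forall>x. \<bar>x\<bar> > R \<longrightarrow> \<phi> x = 0)"

definition weak_deriv :: "fn \<Rightarrow> fn \<Rightarrow> bool" where
  "weak_deriv f g \<longleftrightarrow> (\<forall>\<phi> \<phi>'. test_fun \<phi> \<phi>' \<longrightarrow>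
     (LINT x|lborel. f x * \<phi>' x) = - (LINT x|lborel. g x * \<phi> x))"

definition q_op :: oper where
  "q_op f g \<longleftrightarrow> L2 f \<and> L2 g \<and> (AE x in lborel. g x = complex_of_real x * f x)"

definition qinv_op :: oper where
  "qinv_op f g \<longleftrightarrow> L2 f \<and> L2 g \<and> (AE x in lborel. g x = f x / complex_of_real x)"

text \<open>p = -i d/dx on its natural (self-adjoint) domain H^1(R).\<close>
definition p_op :: oper where
  "p_op f g \<longleftrightarrow> L2 f \<and> L2 g \<and> weak_deriv f (\<lambda>x. \<i> * g x)"

text \<open>t = q^{-1} p with D(t) = {f in D(p). p f in D(q^{-1})}.\<close>
definition t_op :: oper where
  "t_op = p_op OO qinv_op"

definition t_adj :: oper where
  "t_adj g k \<longleftrightarrow> L2 g \<and> L2 k \<and>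
     (\<forall>f u. t_op f u \<longrightarrow> L2inner u g = L2inner f k)"

definition h_eps :: "real \<Rightarrow> oper" where
  "h_eps \<epsilon> f g \<longleftrightarrow> L2 g \<and> (\<exists>a b. (p_op OO p_op) f a \<and> (q_op OO q_op) f b \<and>
     (AE x in lborel. g x = (complex_of_real \<epsilon> * a x + b x) / 2))"

definition series_op :: "oper \<Rightarrow> real \<Rightarrow> oper" where
  "series_op T \<epsilon> f g \<longleftrightarrow> (\<exists>u L. (\<forall>n. (T ^^ (2*n+1)) f (u n)) \<and> L2 L \<and>
     (\<lambda>N. L2norm (\<lambda>x. (\<Sum>n\<le>N. complex_of_real ((-1)^n / real (2*n+1) * (sqrt \<epsilon>)^(2*n+1)) * u n x)
                     - L x)) \<longlonglongrightarrow> 0 \<and>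
     L2 g \<and> (AE x in lborel. g x = - complex_of_real (1 / sqrt \<epsilon>) * L x))"

definition S_eps :: "real \<Rightarrow> oper" where
  "S_eps \<epsilon> f g \<longleftrightarrow> L2_even f \<and> series_op t_op \<epsilon> f g"

definition S_star_eps :: "real \<Rightarrow> oper" where
  "S_star_eps \<epsilon> f g \<longleftrightarrow> L2_odd f \<and> series_op t_adj \<epsilon> f g"

text \<open>M_{eps,0} and M_{eps,1}: (complex) linear spans written out explicitly.\<close>
definition M_eps0 :: "real \<Rightarrow> fn set" where
  "M_eps0 \<epsilon> = {f. \<exists>F c. finite F \<and> (\<forall>(n,\<alpha>)\<in>F. 0 < \<alpha> \<and> \<alpha> < 1) \<and>
     f = (\<lambda>x. \<Sum>(n,\<alpha>)\<in>F. c (n,\<alpha>) * complex_of_real (x^(2*n) * exp (- \<alpha> * x\<^sup>2 / (2 * sqrt \<epsilon>))))}"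

definition M_eps1 :: "real \<Rightarrow> fn set" where
  "M_eps1 \<epsilon> = {f. \<exists>F c. finite F \<and> (\<forall>(n,\<alpha>)\<in>F. 0 < \<alpha> \<and> \<alpha> < 1) \<and>
     f = (\<lambda>x. \<Sum>(n,\<alpha>)\<in>F. c (n,\<alpha>) * complex_of_real (x^(2*n+1) * exp (- \<alpha> * x\<^sup>2 / (2 * sqrt \<epsilon>))))}"

end

theory Submission
  imports Defs "HOL-Probability.Probability" "HOL-Computational_Algebra.Polynomial"
begin

definition gterm :: "real \<Rightarrow> complex poly \<Rightarrow> real \<Rightarrow> complex" where
  "gterm a Q x = poly Q (complex_of_real x) * complex_of_real (exp (- a * x\<^sup>2))"

definition gf :: "'i set \<Rightarrow> ('i \<Rightarrow> real) \<Rightarrow> ('i \<Rightarrow> complex poly) \<Rightarrow> real \<Rightarrow> complex" where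
  "gf I r P x = (\<Sum>i\<in>I. gterm (r i) (P i) x)"

definition Dop :: "real \<Rightarrow> complex poly \<Rightarrow> complex poly" where
  "Dop a Q = pderiv Q - smult (complex_of_real (2*a)) (pCons 0 Q)"

lemma gterm_deriv: "(gterm a Q has_vector_derivative gterm a (Dop a Q) x) (at x)"
proof -
  have 1: "((\<lambda>x. poly Q (complex_of_real x)) has_vector_derivative poly (pderiv Q) (complex_of_real x)) (at x)"
    by (rule has_vector_derivative_real_field[OF poly_DERIV])
  have 2: "((\<lambda>x. complex_of_real (exp (- a * x\<^sup>2))) has_vector_derivative complex_of_real (exp (- a * x\<^sup>2) * (- (2 * a * x)))) (at x)"
    by (rule has_vector_derivative_of_real) (auto intro!: derivative_eq_intros)
  have "(gterm a Q has_vector_derivative poly Q (complex_of_real x) * complex_of_real (exp (- a * x\<^sup>2) * (- (2 * a * x))) + poly (pderiv Q) (complex_of_real x) * complex_of_real (exp (- a * x\<^sup>2))) (at x)"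
    unfolding gterm_def by (rule has_vector_derivative_mult[OF 1 2])
  moreover have "poly Q (complex_of_real x) * complex_of_real (exp (- a * x\<^sup>2) * (- (2 * a * x))) + poly (pderiv Q) (complex_of_real x) * complex_of_real (exp (- a * x\<^sup>2)) = gterm a (Dop a Q) x"
    by (simp add: gterm_def Dop_def algebra_simps)
  ultimately show ?thesis by simp
qed

lemma gf_fun: "gf I r P = (\<lambda>x. \<Sum>i\<in>I. gterm (r i) (P i) x)"
  by (simp add: fun_eq_iff gf_def)

lemma gf_deriv: "(gf I r P has_vector_derivative gf I r (\<lambda>i. Dop (r i) (P i)) x) (at x)"
  unfolding gf_fun by (rule has_vector_derivative_sum) (rule gterm_deriv)

lemma gf_cont: "continuous_on UNIV (gf I r P)"
  by (metis continuous_at_imp_continuous_on gf_deriv has_vector_derivative_continuous)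

lemma gf_meas: "gf I r P \<in> borel_measurable lborel"
  using borel_measurable_continuous_onI[OF gf_cont] by simp

lemma poly_sum_le: "degree (Q::complex poly) \<le> d \<Longrightarrow> poly Q z = (\<Sum>k\<le>d. coeff Q k * z^k)"
proof -
  assume "degree Q \<le> d"
  then have "poly Q z = poly (\<Sum>i\<le>d. monom (coeff Q i) i) z"
    by (simp add: poly_as_sum_of_monoms')
  then show ?thesis by (simp add: poly_sum poly_monom)
qed

lemma poly_sq_bound:
  assumes "degree Q \<le> d"
  shows "(cmod (poly Q (complex_of_real x)))\<^sup>2 \<le> real (Suc d) * (\<Sum>k\<le>d. (cmod (coeff Q k))\<^sup>2 * \<bar>x\<bar>^(2*k))"
proof -
  have "cmod (poly Q (complex_of_real x)) \<le> (\<Sum>k\<le>d. cmod (coeff Q k) * \<bar>x\<bar>^k)"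
    unfolding poly_sum_le[OF assms]
    by (rule order.trans[OF norm_sum]) (simp add: norm_mult norm_power)
  then have "(cmod (poly Q (complex_of_real x)))\<^sup>2 \<le> (\<Sum>k\<le>d. cmod (coeff Q k) * \<bar>x\<bar>^k)\<^sup>2"
    by (simp add: power_mono)
  also have "\<dots> \<le> (\<Sum>k\<le>d. (cmod (coeff Q k) * \<bar>x\<bar>^k)\<^sup>2) * real (card {..d})"
    by (rule sum_squared_le_sum_of_squares)
  also have "\<dots> = real (Suc d) * (\<Sum>k\<le>d. (cmod (coeff Q k))\<^sup>2 * \<bar>x\<bar>^(2*k))"
    by (simp add: power_mult_distrib power_mult[symmetric] mult.commute)
  finally show ?thesis .
qed

definition gbnd :: "real \<Rightarrow> nat \<Rightarrow> complex poly \<Rightarrow> real \<Rightarrow> real" where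
  "gbnd a d Q x = real (Suc d) * (\<Sum>k\<le>d. (cmod (coeff Q k))\<^sup>2 * (\<bar>x\<bar>^(2*k) * exp (- (2*a * x\<^sup>2))))"

lemma gterm_sq_bound:
  assumes "degree Q \<le> d"
  shows "(cmod (gterm a Q x))\<^sup>2 \<le> gbnd a d Q x"
proof -
  have e: "(exp (- (a * x\<^sup>2)))\<^sup>2 = exp (- (2 * a * x\<^sup>2))"
    by (simp add: power2_eq_square exp_add[symmetric])
  have "(cmod (gterm a Q x))\<^sup>2 = (cmod (poly Q (complex_of_real x)))\<^sup>2 * exp (- (2*a * x\<^sup>2))"
    by (simp add: gterm_def norm_mult power_mult_distrib e)
  also have "\<dots> \<le> real (Suc d) * (\<Sum>k\<le>d. (cmod (coeff Q k))\<^sup>2 * \<bar>x\<bar>^(2*k)) * exp (- (2*a * x\<^sup>2))"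
    by (rule mult_right_mono[OF poly_sq_bound[OF assms]]) simp
  also have "\<dots> = gbnd a d Q x"
    by (simp add: gbnd_def sum_distrib_right mult.assoc)
  finally show ?thesis .
qed

definition gfbnd :: "'i set \<Rightarrow> ('i \<Rightarrow> real) \<Rightarrow> nat \<Rightarrow> ('i \<Rightarrow> complex poly) \<Rightarrow> real \<Rightarrow> real" where
  "gfbnd I r d P x = real (card I) * (\<Sum>i\<in>I. gbnd (r i) d (P i) x)"

lemma gf_sq_bound:
  assumes "\<forall>i\<in>I. degree (P i) \<le> d"
  shows "(cmod (gf I r P x))\<^sup>2 \<le> gfbnd I r d P x"
proof -
  have "cmod (gf I r P x) \<le> (\<Sum>i\<in>I. cmod (gterm (r i) (P i) x))"
    unfolding gf_def by (rule norm_sum)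
  then have "(cmod (gf I r P x))\<^sup>2 \<le> (\<Sum>i\<in>I. cmod (gterm (r i) (P i) x))\<^sup>2"
    by (simp add: power_mono)
  also have "\<dots> \<le> (\<Sum>i\<in>I. (cmod (gterm (r i) (P i) x))\<^sup>2) * real (card I)"
    by (rule sum_squared_le_sum_of_squares)
  also have "\<dots> \<le> (\<Sum>i\<in>I. gbnd (r i) d (P i) x) * real (card I)"
    by (intro mult_right_mono sum_mono gterm_sq_bound) (use assms in auto)
  finally show ?thesis by (simp add: gfbnd_def mult.commute)
qed

lemma integrable_moment:
  fixes b :: real
  assumes "b > 0"
  shows "integrable lborel (\<lambda>x. \<bar>x\<bar>^n * exp (- (b * x\<^sup>2)))"
proof -
  define \<sigma> where "\<sigma> = 1 / sqrt (2*b)"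
  have s: "\<sigma> > 0" using assms by (simp add: \<sigma>_def)
  have s2: "2 * \<sigma>\<^sup>2 = 1 / b" using assms by (simp add: \<sigma>_def power_divide)
  have int: "integrable lborel (\<lambda>x. sqrt (2 * pi * \<sigma>\<^sup>2) * (normal_density 0 \<sigma> x * \<bar>x - 0\<bar>^n))"
    by (intro integrable_mult_right integrable_normal_moment_abs s)
  have eq: "(\<lambda>x. sqrt (2 * pi * \<sigma>\<^sup>2) * (normal_density 0 \<sigma> x * \<bar>x - 0\<bar>^n)) = (\<lambda>x. \<bar>x\<bar>^n * exp (- (b * x\<^sup>2)))"
    using s assms by (simp add: fun_eq_iff normal_density_def s2 field_simps)
  from int show ?thesis unfolding eq .
qed

lemma integrable_gbnd: "a > 0 \<Longrightarrow> integrable lborel (gbnd a d Q)"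
  unfolding gbnd_def[abs_def]
  apply (rule integrable_mult_right, rule Bochner_Integration.integrable_sum, rule integrable_mult_right)
  apply (rule integrable_moment) by simp

lemma integrable_gfbnd: "finite I \<Longrightarrow> \<forall>i\<in>I. r i > 0 \<Longrightarrow> integrable lborel (gfbnd I r d P)"
  unfolding gfbnd_def[abs_def]
  apply (rule integrable_mult_right, rule Bochner_Integration.integrable_sum, rule integrable_gbnd) by auto

lemma L2_gf:
  assumes "finite I" "\<forall>i\<in>I. r i > 0"
  shows "L2 (gf I r P)"
proof -
  define d where "d = (\<Sum>i\<in>I. degree (P i))"
  have dd: "\<forall>i\<in>I. degree (P i) \<le> d"
    using assms(1) by (auto simp: d_def intro: member_le_sum)
  show ?thesis unfolding L2_def
  proof (intro conjI gf_meas)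
    show "integrable lborel (\<lambda>x. (cmod (gf I r P x))\<^sup>2)"
    proof (rule Bochner_Integration.integrable_bound[OF integrable_gfbnd[OF assms, of d P]])
      show "(\<lambda>x. (cmod (gf I r P x))\<^sup>2) \<in> borel_measurable lborel" using gf_meas by measurable
      show "AE x in lborel. norm ((cmod (gf I r P x))\<^sup>2) \<le> norm (gfbnd I r d P x)"
        using gf_sq_bound[OF dd] by (auto intro!: AE_I2 order.trans[OF _ abs_ge_self])
    qed
  qed
qed


lemma integrable_cpt:
  fixes g :: "real \<Rightarrow> complex"
  assumes "continuous_on UNIV g" "\<And>x. \<bar>x\<bar> > c \<Longrightarrow> g x = 0"
  shows "integrable lborel g"
proof -
  have "integrable lborel (\<lambda>x. indicat_real {-c..c} x *\<^sub>R g x)"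
    by (rule borel_integrable_compact) (auto intro: continuous_on_subset[OF assms(1)])
  moreover have "(\<lambda>x. indicat_real {-c..c} x *\<^sub>R g x) = g"
    using assms(2) by (force simp: fun_eq_iff indicator_def abs_le_iff)
  ultimately show ?thesis by simp
qed

lemma has_integral_cpt:
  fixes g :: "real \<Rightarrow> complex"
  assumes "(g has_integral v) {a..b}" "\<And>x. x \<notin> {a..b} \<Longrightarrow> g x = 0" "integrable lborel g"
  shows "integral\<^sup>L lborel g = v"
proof -
  have "(g has_integral v) UNIV"
    by (rule has_integral_on_superset[OF assms(1)]) (use assms(2) in auto)
  moreover have "(g has_integral integral\<^sup>L lborel g) UNIV"
    by (rule has_integral_integral_lborel[OF assms(3)])
  ultimately show ?thesis using has_integral_unique by blast
qed

lemma test_fun_deriv_zero: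
  assumes "test_fun \<phi> \<phi>'"
  obtains R where "R \<ge> 0" "\<And>x. \<bar>x\<bar> > R \<Longrightarrow> \<phi> x = 0" "\<And>x. \<bar>x\<bar> > R \<Longrightarrow> \<phi>' x = 0"
proof -
  from assms obtain R0 where R0: "\<forall>x. \<bar>x\<bar> > R0 \<longrightarrow> \<phi> x = 0" unfolding test_fun_def by blast
  define R where "R = \<bar>R0\<bar>"
  have z: "\<phi> x = 0" if "\<bar>x\<bar> > R" for x using R0 that by (auto simp: R_def)
  have "\<phi>' x = 0" if x: "\<bar>x\<bar> > R" for x
  proof -
    have d: "(\<phi> has_vector_derivative \<phi>' x) (at x)" using assms unfolding test_fun_def by blast
    have "((\<lambda>_. 0) has_vector_derivative 0) (at x)" by (rule has_vector_derivative_const)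
    then have "(\<phi> has_vector_derivative 0) (at x)"
      by (rule has_vector_derivative_transform_within_open[of _ _ _ "{y. \<bar>y\<bar> > R}"])
         (use x z in \<open>auto intro!: open_Collect_less continuous_intros\<close>)
    then show ?thesis using d vector_derivative_unique_at by blast
  qed
  then show ?thesis using that[of R] z by (auto simp: R_def)
qed

lemma weak_deriv_C1:
  fixes f f' :: "real \<Rightarrow> complex"
  assumes fd: "\<And>x. (f has_vector_derivative f' x) (at x)" and fc: "continuous_on UNIV f'"
  shows "weak_deriv f f'"
  unfolding weak_deriv_def
proof (intro allI impI)
  fix \<phi> \<phi>' assume tf: "test_fun \<phi> \<phi>'"
  obtain R where R: "R \<ge> 0" "\<And>x. \<bar>x\<bar> > R \<Longrightarrow> \<phi> x = 0" "\<And>x. \<bar>x\<bar> > R \<Longrightarrow> \<phi>' x = 0"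
    using test_fun_deriv_zero[OF tf] by blast
  have \<phi>d: "\<And>x. (\<phi> has_vector_derivative \<phi>' x) (at x)" and \<phi>'c: "continuous_on UNIV \<phi>'"
    using tf unfolding test_fun_def by auto
  have fcont: "continuous_on UNIV f"
    by (metis continuous_at_imp_continuous_on fd has_vector_derivative_continuous)
  have \<phi>cont: "continuous_on UNIV \<phi>"
    by (metis continuous_at_imp_continuous_on \<phi>d has_vector_derivative_continuous)
  define F' where "F' x = f x * \<phi>' x + f' x * \<phi> x" for x
  have Fd: "((\<lambda>x. f x * \<phi> x) has_vector_derivative F' x) (at x within {-R-1..R+1})" for x
    unfolding F'_def by (rule has_vector_derivative_at_within, rule has_vector_derivative_mult[OF fd \<phi>d])
  have "(F' has_integral (f (R+1) * \<phi> (R+1) - f (-R-1) * \<phi> (-R-1))) {-R-1..R+1}"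
    by (rule fundamental_theorem_of_calculus) (use R Fd in auto)
  moreover have "\<phi> (R+1) = 0" "\<phi> (-R-1) = 0" using R by auto
  ultimately have hi: "(F' has_integral 0) {-R-1..R+1}" by simp
  have c1: "continuous_on UNIV (\<lambda>x. f x * \<phi>' x)" by (intro continuous_intros fcont \<phi>'c)
  have c2: "continuous_on UNIV (\<lambda>x. f' x * \<phi> x)" by (intro continuous_intros fc \<phi>cont)
  have i1: "integrable lborel (\<lambda>x. f x * \<phi>' x)" by (rule integrable_cpt[OF c1, of R]) (use R in auto)
  have i2: "integrable lborel (\<lambda>x. f' x * \<phi> x)" by (rule integrable_cpt[OF c2, of R]) (use R in auto)
  have iF: "integrable lborel F'" unfolding F'_def using i1 i2 by simp
  have "integral\<^sup>L lborel F' = 0"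
    by (rule has_integral_cpt[OF hi _ iF]) (use R in \<open>auto simp: F'_def\<close>)
  then have "(LINT x|lborel. f x * \<phi>' x) + (LINT x|lborel. f' x * \<phi> x) = 0"
    unfolding F'_def using i1 i2 by simp
  then show "(LINT x|lborel. f x * \<phi>' x) = - (LINT x|lborel. f' x * \<phi> x)"
    by (simp add: eq_neg_iff_add_eq_0)
qed


lemma gf_smult: "gf I r (\<lambda>i. smult c (P i)) x = c * gf I r P x"
  by (simp add: gf_def gterm_def sum_distrib_left mult.assoc)

lemma gf_minus: "gf I r (\<lambda>i. - P i) x = - gf I r P x"
  by (simp add: gf_def gterm_def sum_negf)

lemma gf_add: "gf I r (\<lambda>i. P i + Q i) x = gf I r P x + gf I r Q x"
  by (simp add: gf_def gterm_def sum.distrib algebra_simps)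

lemma gf_diff: "gf I r (\<lambda>i. P i - Q i) x = gf I r P x - gf I r Q x"
  by (simp add: gf_def gterm_def sum_subtractf algebra_simps)

lemma gf_sum: "gf I r (\<lambda>i. \<Sum>n\<in>N. P n i) x = (\<Sum>n\<in>N. gf I r (P n) x)"
  by (simp add: gf_def gterm_def poly_sum sum_distrib_right sum.swap[of _ I])

lemma gf_pCons: "gf I r (\<lambda>i. pCons 0 (P i)) x = complex_of_real x * gf I r P x"
  by (simp add: gf_def gterm_def sum_distrib_left mult.assoc)

lemma pCons_shift: "coeff Q 0 = 0 \<Longrightarrow> pCons 0 (poly_shift (Suc 0) Q) = Q"
  by (rule poly_eqI) (auto simp: coeff_pCons coeff_poly_shift split: nat.split)

lemma gf_shift:
  assumes "\<forall>i\<in>I. coeff (P i) 0 = 0"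
  shows "gf I r P x = complex_of_real x * gf I r (\<lambda>i. poly_shift 1 (P i)) x"
proof -
  have "gf I r P x = gf I r (\<lambda>i. pCons 0 (poly_shift 1 (P i))) x"
    unfolding gf_def using assms by (auto intro!: sum.cong simp: pCons_shift)
  then show ?thesis by (simp add: gf_pCons)
qed

lemma Dop_smult: "Dop a (smult c Q) = smult c (Dop a Q)"
proof -
  have "smult (complex_of_real (2*a)) (pCons 0 (smult c Q)) = smult c (smult (complex_of_real (2*a)) (pCons 0 Q))"
    by (simp add: smult_smult mult.commute)
  then show ?thesis by (simp add: Dop_def pderiv_smult smult_diff_right)
qed

lemma Dop_minus: "Dop a (- Q) = - Dop a Q"
  by (simp add: Dop_def pderiv_minus)

lemma Dop_add: "Dop a (Q + R) = Dop a Q + Dop a R"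
  by (simp add: Dop_def pderiv_add smult_add_right)

lemma Dop_diff: "Dop a (Q - R) = Dop a Q - Dop a R"
  by (simp add: Dop_def pderiv_diff smult_diff_right)

lemma Dop_0[simp]: "Dop a 0 = 0"
  by (simp add: Dop_def)

lemma Dop_sum: "Dop a (\<Sum>n\<in>N. Q n) = (\<Sum>n\<in>N. Dop a (Q n))"
  by (induction N rule: infinite_finite_induct) (auto simp: Dop_add)

lemma p_op_gf:
  assumes "finite I" "\<forall>i\<in>I. r i > 0"
  shows "p_op (gf I r P) (gf I r (\<lambda>i. smult (-\<i>) (Dop (r i) (P i))))"
  unfolding p_op_def
proof (intro conjI L2_gf assms)
  have e: "(\<lambda>x. \<i> * gf I r (\<lambda>i. smult (-\<i>) (Dop (r i) (P i))) x) = gf I r (\<lambda>i. Dop (r i) (P i))"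
    by (simp add: gf_smult gf_minus fun_eq_iff)
  show "weak_deriv (gf I r P) (\<lambda>x. \<i> * gf I r (\<lambda>i. smult (-\<i>) (Dop (r i) (P i))) x)"
    unfolding e by (rule weak_deriv_C1[OF gf_deriv gf_cont])
qed

lemma q_op_gf:
  assumes "finite I" "\<forall>i\<in>I. r i > 0"
  shows "q_op (gf I r P) (gf I r (\<lambda>i. pCons 0 (P i)))"
  unfolding q_op_def by (simp add: L2_gf assms gf_pCons)

lemma qinv_op_gf:
  assumes "finite I" "\<forall>i\<in>I. r i > 0" "\<forall>i\<in>I. coeff (P i) 0 = 0"
  shows "qinv_op (gf I r P) (gf I r (\<lambda>i. poly_shift 1 (P i)))"
  unfolding qinv_op_def
proof (intro conjI L2_gf assms)
  show "AE x in lborel. gf I r (\<lambda>i. poly_shift 1 (P i)) x = gf I r P x / complex_of_real x"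
    using AE_lborel_singleton[of 0] by eventually_elim (simp add: gf_shift[OF assms(3)])
qed

definition evenp :: "complex poly \<Rightarrow> bool" where
  "evenp Q \<longleftrightarrow> (\<forall>k. odd k \<longrightarrow> coeff Q k = 0)"

definition oddp :: "complex poly \<Rightarrow> bool" where
  "oddp Q \<longleftrightarrow> (\<forall>k. even k \<longrightarrow> coeff Q k = 0)"

lemma coeff_Dop: "coeff (Dop a Q) k = of_nat (Suc k) * coeff Q (Suc k) - complex_of_real (2*a) * (case k of 0 \<Rightarrow> 0 | Suc j \<Rightarrow> coeff Q j)"
  by (simp add: Dop_def coeff_pderiv coeff_pCons split: nat.split)

definition Tev :: "real \<Rightarrow> complex poly \<Rightarrow> complex poly" where
  "Tev a Q = poly_shift 1 (smult (-\<i>) (Dop a Q))"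

definition Tod :: "real \<Rightarrow> complex poly \<Rightarrow> complex poly" where
  "Tod a Q = smult (-\<i>) (Dop a (poly_shift 1 Q))"

lemma coeff_Tev: "coeff (Tev a Q) k = -\<i> * (of_nat (k+2) * coeff Q (k+2) - complex_of_real (2*a) * coeff Q k)"
  by (simp add: Tev_def coeff_poly_shift coeff_Dop)

lemma coeff_Tod: "coeff Q 0 = 0 \<Longrightarrow> coeff (Tod a Q) k = -\<i> * (of_nat (k+1) * coeff Q (k+2) - complex_of_real (2*a) * coeff Q k)"
  by (cases k) (simp_all add: Tod_def coeff_poly_shift coeff_Dop)

lemma evenp_Tev: "evenp Q \<Longrightarrow> evenp (Tev a Q)"
  by (simp add: evenp_def coeff_Tev)

lemma oddp_Tod: "oddp Q \<Longrightarrow> oddp (Tod a Q)"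
  by (simp add: oddp_def coeff_Tod)

lemma t_op_gf:
  assumes "finite I" "\<forall>i\<in>I. r i > 0" "\<forall>i\<in>I. evenp (P i)"
  shows "t_op (gf I r P) (gf I r (\<lambda>i. Tev (r i) (P i)))"
  unfolding t_op_def
proof (rule relcomppI)
  show "p_op (gf I r P) (gf I r (\<lambda>i. smult (-\<i>) (Dop (r i) (P i))))" by (rule p_op_gf[OF assms(1,2)])
  have "\<forall>i\<in>I. coeff (smult (-\<i>) (Dop (r i) (P i))) 0 = 0"
    using assms(3) by (simp add: coeff_Dop evenp_def)
  then show "qinv_op (gf I r (\<lambda>i. smult (-\<i>) (Dop (r i) (P i)))) (gf I r (\<lambda>i. Tev (r i) (P i)))"
    unfolding Tev_def by (rule qinv_op_gf[OF assms(1,2)])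
qed

lemma poly_even: "evenp Q \<Longrightarrow> poly Q (-z) = poly Q z"
  unfolding poly_altdef evenp_def by (intro sum.cong refl) (metis mult_zero_left power_minus_even)

lemma poly_odd: "oddp Q \<Longrightarrow> poly Q (-z) = - poly Q z"
  unfolding poly_altdef oddp_def sum_negf[symmetric] by (intro sum.cong refl) (metis mult_zero_left minus_zero mult_minus_right power_minus_odd)

lemma L2_even_gf:
  assumes "finite I" "\<forall>i\<in>I. r i > 0" "\<forall>i\<in>I. evenp (P i)"
  shows "L2_even (gf I r P)"
  unfolding L2_even_def using assms by (auto intro!: L2_gf AE_I2 sum.cong simp: gf_def gterm_def poly_even)

lemma L2_odd_gf:
  assumes "finite I" "\<forall>i\<in>I. r i > 0" "\<forall>i\<in>I. oddp (P i)"
  shows "L2_odd (gf I r P)"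
  unfolding L2_odd_def using assms by (auto intro!: L2_gf AE_I2 simp: gf_def gterm_def poly_odd sum_negf[symmetric])

definition Hop :: "real \<Rightarrow> real \<Rightarrow> complex poly \<Rightarrow> complex poly" where
  "Hop e a Q = smult (1/2) (smult (- complex_of_real e) (Dop a (Dop a Q)) + pCons 0 (pCons 0 Q))"

lemma h_eps_gf:
  assumes "finite I" "\<forall>i\<in>I. r i > 0"
  shows "h_eps e (gf I r P) (gf I r (\<lambda>i. Hop e (r i) (P i)))"
  unfolding h_eps_def
proof (intro conjI L2_gf assms exI)
  let ?a = "gf I r (\<lambda>i. smult (-\<i>) (Dop (r i) (smult (-\<i>) (Dop (r i) (P i)))))"
  let ?b = "gf I r (\<lambda>i. pCons 0 (pCons 0 (P i)))"
  show "(p_op OO p_op) (gf I r P) ?a"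
    by (rule relcomppI, rule p_op_gf[OF assms], rule p_op_gf[OF assms])
  show "(q_op OO q_op) (gf I r P) ?b"
    by (rule relcomppI, rule q_op_gf[OF assms], rule q_op_gf[OF assms])
  show "AE x in lborel. gf I r (\<lambda>i. Hop e (r i) (P i)) x = (complex_of_real e * ?a x + ?b x) / 2"
    by (rule AE_I2) (simp add: Hop_def gf_smult gf_add gf_diff gf_minus Dop_smult Dop_minus)
qed


definition mcut :: "real \<Rightarrow> real" where "mcut u = (max 0 u)\<^sup>2"

lemma mcut_deriv: "(mcut has_real_derivative 2 * max 0 u) (at u)"
proof (cases "u > 0")
  case True
  have "((\<lambda>u. u\<^sup>2) has_real_derivative 2 * u) (at u)" by (auto intro!: derivative_eq_intros)
  then have "(mcut has_real_derivative 2 * u) (at u)"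
    by (rule has_field_derivative_transform_within_open[of _ _ _ "{0<..}"]) (use True in \<open>auto simp: mcut_def\<close>)
  then show ?thesis using True by simp
next
  case False
  show ?thesis
  proof (cases "u < 0")
    case True
    have "((\<lambda>u. 0) has_real_derivative 0) (at u)" by simp
    then have "(mcut has_real_derivative 0) (at u)"
      by (rule has_field_derivative_transform_within_open[of _ _ _ "{..<0}"]) (use True in \<open>auto simp: mcut_def\<close>)
    then show ?thesis using True by simp
  next
    case False
    with \<open>\<not> u > 0\<close> have u: "u = 0" by simp
    have "((\<lambda>y. (mcut y - mcut 0) / (y - 0)) \<longlongrightarrow> 0) (at 0)"
    proof (rule Lim_null_comparison)
      have "norm ((mcut y - mcut 0) / (y - 0)) \<le> \<bar>y\<bar>" for y
      proof (cases "y > 0")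
        case True then show ?thesis by (simp add: mcut_def power2_eq_square)
      next
        case False then show ?thesis by (simp add: mcut_def)
      qed
      then show "\<forall>\<^sub>F y in at 0. norm ((mcut y - mcut 0) / (y - 0)) \<le> \<bar>y\<bar>" by simp
      show "((\<lambda>y. \<bar>y\<bar>) \<longlongrightarrow> 0) (at (0::real))"
        by (intro tendsto_rabs_zero tendsto_ident_at)
    qed
    then show ?thesis using u by (simp add: has_field_derivative_iff)
  qed
qed

definition chi :: "real \<Rightarrow> real" where "chi y = mcut (1 - y\<^sup>2)"
definition chi' :: "real \<Rightarrow> real" where "chi' y = 2 * max 0 (1 - y\<^sup>2) * (- 2 * y)"

lemma chi_deriv: "(chi has_real_derivative chi' y) (at y)"
proof -
  have "((\<lambda>y. mcut (1 - y\<^sup>2)) has_real_derivative 2 * max 0 (1 - y\<^sup>2) * (- 2 * y)) (at y)"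
    by (rule DERIV_chain2[OF mcut_deriv]) (auto intro!: derivative_eq_intros)
  then show ?thesis unfolding chi_def[abs_def] chi'_def .
qed

lemma chi_cont: "isCont chi y"
  using chi_deriv DERIV_isCont by blast

lemma chi'_cont: "continuous_on UNIV chi'"
  unfolding chi'_def[abs_def] by (intro continuous_intros)

lemma chi_0[simp]: "chi 0 = 1" by (simp add: chi_def mcut_def)

lemma chi_bnd: "0 \<le> chi y" "chi y \<le> 1"
proof -
  have "max 0 (1 - y\<^sup>2) \<le> 1" by simp
  moreover have "0 \<le> max 0 (1 - y\<^sup>2)" by simp
  ultimately show "0 \<le> chi y" "chi y \<le> 1" unfolding chi_def mcut_def
    by (simp_all add: power_le_one)
qed

lemma chi'_bnd: "\<bar>chi' y\<bar> \<le> 4"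
proof (cases "y\<^sup>2 \<le> 1")
  case True
  then have y1: "\<bar>y\<bar> \<le> 1" by (simp add: abs_square_le_1)
  have "\<bar>chi' y\<bar> = 4 * ((1 - y\<^sup>2) * \<bar>y\<bar>)" using True by (simp add: chi'_def abs_mult)
  also have "(1 - y\<^sup>2) * \<bar>y\<bar> \<le> 1 * 1"
    by (rule mult_mono) (use True y1 in auto)
  finally show ?thesis by simp
next
  case False then show ?thesis by (simp add: chi'_def)
qed

lemma chi_supp: "1 < \<bar>y\<bar> \<Longrightarrow> chi y = 0"
proof -
  assume "1 < \<bar>y\<bar>"
  then have "1 < y\<^sup>2" using one_less_power[of "\<bar>y\<bar>" 2] by simp
  then show "chi y = 0" by (simp add: chi_def mcut_def)
qed

lemma L2_prod_norm:
  assumes "L2 f" "L2 g"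
  shows "integrable lborel (\<lambda>x. cmod (f x) * cmod (g x))"
proof (rule Bochner_Integration.integrable_bound)
  show "integrable lborel (\<lambda>x. ((cmod (f x))\<^sup>2 + (cmod (g x))\<^sup>2) / 2)"
    using assms unfolding L2_def by auto
  show "(\<lambda>x. cmod (f x) * cmod (g x)) \<in> borel_measurable lborel"
    using assms unfolding L2_def by (intro borel_measurable_times borel_measurable_norm) auto
  have "cmod (f x) * cmod (g x) \<le> ((cmod (f x))\<^sup>2 + (cmod (g x))\<^sup>2) / 2" for x
  proof -
    have "0 \<le> (cmod (f x) - cmod (g x))\<^sup>2" by simp
    then show ?thesis by (simp add: power2_eq_square algebra_simps)
  qed
  then show "AE x in lborel. norm (cmod (f x) * cmod (g x)) \<le> norm (((cmod (f x))\<^sup>2 + (cmod (g x))\<^sup>2) / 2)"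
    by (auto intro!: AE_I2)
qed


lemma adj_key:
  fixes f w \<psi> \<psi>' :: "real \<Rightarrow> complex"
  assumes \<psi>d: "\<And>x. (\<psi> has_vector_derivative \<psi>' x) (at x)" and \<psi>'c: "continuous_on UNIV \<psi>'"
    and L\<psi>: "L2 \<psi>" and L\<psi>': "L2 \<psi>'" and Lf: "L2 f" and Lw: "L2 w"
    and wd: "weak_deriv f (\<lambda>x. \<i> * w x)"
  shows "(LINT x|lborel. cnj (w x) * \<psi> x) = (LINT x|lborel. cnj (f x) * (-\<i> * \<psi>' x))"
proof -
  define N where "N n = real (Suc n)" for n
  have Npos: "N n \<ge> 1" for n by (simp add: N_def)
  have aN: "\<bar>N n\<bar> = N n" for n using Npos[of n] by simp
  define \<phi> where "\<phi> n x = complex_of_real (chi (x / N n)) * cnj (\<psi> x)" for n x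
  define \<phi>' where "\<phi>' n x = complex_of_real (chi' (x / N n) / N n) * cnj (\<psi> x) + complex_of_real (chi (x / N n)) * cnj (\<psi>' x)" for n x
  have \<psi>c: "continuous_on UNIV \<psi>"
    by (metis continuous_at_imp_continuous_on \<psi>d has_vector_derivative_continuous)
  have chic: "continuous_on UNIV chi"
    by (simp add: chi_cont continuous_at_imp_continuous_on)
  have tf: "test_fun (\<phi> n) (\<phi>' n)" for n
    unfolding test_fun_def
  proof (intro conjI allI impI exI)
    fix x
    have d1: "((\<lambda>x. chi (x / N n)) has_real_derivative chi' (x / N n) * (1 / N n)) (at x)"
      by (rule DERIV_chain2[OF chi_deriv]) (auto intro!: derivative_eq_intros simp: N_def)
    have d1': "((\<lambda>x. complex_of_real (chi (x / N n))) has_vector_derivative complex_of_real (chi' (x / N n) * (1 / N n))) (at x)"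
      by (rule has_vector_derivative_of_real[OF d1])
    have d2: "((\<lambda>x. cnj (\<psi> x)) has_vector_derivative cnj (\<psi>' x)) (at x)"
      by (rule has_vector_derivative_cnj[OF \<psi>d])
    have "(\<phi> n has_vector_derivative complex_of_real (chi (x / N n)) * cnj (\<psi>' x) + complex_of_real (chi' (x / N n) * (1 / N n)) * cnj (\<psi> x)) (at x)"
      unfolding \<phi>_def by (rule has_vector_derivative_mult[OF d1' d2])
    then show "(\<phi> n has_vector_derivative \<phi>' n x) (at x)"
      by (simp add: \<phi>'_def algebra_simps)
  next
    show "continuous_on UNIV (\<phi>' n)"
    proof -
      have cc1: "continuous_on UNIV (\<lambda>x. chi' (x / N n))"
        by (rule continuous_on_compose2[OF chi'_cont]) (auto intro!: continuous_intros simp: N_def)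
      have cc2: "continuous_on UNIV (\<lambda>x. chi (x / N n))"
        by (rule continuous_on_compose2[OF chic]) (auto intro!: continuous_intros simp: N_def)
      have cc3: "continuous_on UNIV (\<lambda>x. chi' (x / N n) / N n)"
        using cc1 by (intro continuous_on_divide) (auto simp: N_def)
      show ?thesis unfolding \<phi>'_def[abs_def]
        by (intro continuous_on_add continuous_on_mult continuous_on_of_real cc2 cc3 continuous_on_cnj \<psi>c \<psi>'c)
    qed
  next
    fix x assume "N n < \<bar>x\<bar>"
    moreover have "0 < N n" using Npos[of n] by simp
    ultimately have "1 < \<bar>x\<bar> / N n" by (simp add: less_divide_eq_1_pos)
    then have "1 < \<bar>x / N n\<bar>" using \<open>0 < N n\<close> by (simp add: abs_divide abs_of_pos)
    then show "\<phi> n x = 0" by (simp add: \<phi>_def chi_supp)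
  qed
  have eq: "(LINT x|lborel. f x * \<phi>' n x) = - (LINT x|lborel. \<i> * w x * \<phi> n x)" for n
    using wd tf unfolding weak_deriv_def by blast
  have mf: "f \<in> borel_measurable lborel" and mw: "w \<in> borel_measurable lborel"
    and m\<psi>: "\<psi> \<in> borel_measurable lborel" and m\<psi>': "\<psi>' \<in> borel_measurable lborel"
    using Lf Lw L\<psi> L\<psi>' by (auto simp: L2_def)
  have mchi: "chi \<in> borel_measurable borel" "chi' \<in> borel_measurable borel"
    using borel_measurable_continuous_onI[OF chic] borel_measurable_continuous_onI[OF chi'_cont] by auto
  have mc: "(\<lambda>x. cnj (\<psi> x)) \<in> borel_measurable borel" "(\<lambda>x. cnj (\<psi>' x)) \<in> borel_measurable borel"
    by (intro borel_measurable_continuous_onI continuous_on_cnj \<psi>c \<psi>'c)+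
  have mc': "(\<lambda>x. cnj (\<psi> x)) \<in> borel_measurable lborel" "(\<lambda>x. cnj (\<psi>' x)) \<in> borel_measurable lborel"
    using mc by auto
  have lim1: "(\<lambda>n. chi' (x / N n) / N n) \<longlonglongrightarrow> 0" for x
  proof (rule Lim_null_comparison)
    have "norm (chi' (x / N n) / N n) \<le> 4 * inverse (real (Suc n))" for n
    proof -
      have "\<bar>chi' (x / N n)\<bar> / N n \<le> 4 / N n"
        by (rule divide_right_mono[OF chi'_bnd]) (simp add: N_def)
      moreover have "4 / N n = 4 * inverse (real (Suc n))" by (simp add: N_def divide_inverse)
      ultimately show ?thesis by (simp add: abs_divide aN)
    qed
    then show "\<forall>\<^sub>F n in sequentially. norm (chi' (x / N n) / N n) \<le> 4 * inverse (real (Suc n))"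
      by simp
    show "(\<lambda>n. 4 * inverse (real (Suc n))) \<longlonglongrightarrow> 0"
      using tendsto_mult_right_zero[OF LIMSEQ_inverse_real_of_nat] by simp
  qed
  have lim2: "(\<lambda>n. chi (x / N n)) \<longlonglongrightarrow> 1" for x
  proof -
    have "(\<lambda>n. x * inverse (real (Suc n))) \<longlonglongrightarrow> 0"
      using tendsto_mult_right_zero[OF LIMSEQ_inverse_real_of_nat] by (simp add: mult.commute)
    then have "(\<lambda>n. x / N n) \<longlonglongrightarrow> 0" by (simp add: N_def divide_inverse)
    from isCont_tendsto_compose[OF chi_cont this] show ?thesis by simp
  qed
  have c1: "(\<lambda>n. LINT x|lborel. f x * \<phi>' n x) \<longlonglongrightarrow> (LINT x|lborel. f x * cnj (\<psi>' x))"
  proof (rule integral_dominated_convergence[where w="\<lambda>x. 4 * (cmod (f x) * cmod (\<psi> x)) + cmod (f x) * cmod (\<psi>' x)"])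
    show "(\<lambda>x. f x * cnj (\<psi>' x)) \<in> borel_measurable lborel" using mf mc mc' by measurable
    show "(\<lambda>x. f x * \<phi>' n x) \<in> borel_measurable lborel" for n
      unfolding \<phi>'_def using mf mc mc' mchi by measurable
    show "integrable lborel (\<lambda>x. 4 * (cmod (f x) * cmod (\<psi> x)) + cmod (f x) * cmod (\<psi>' x))"
      using L2_prod_norm[OF Lf L\<psi>] L2_prod_norm[OF Lf L\<psi>'] by auto
    show "AE x in lborel. (\<lambda>n. f x * \<phi>' n x) \<longlonglongrightarrow> f x * cnj (\<psi>' x)"
    proof (rule AE_I2)
      fix x
      have "(\<lambda>n. f x * \<phi>' n x) \<longlonglongrightarrow> f x * (complex_of_real 0 * cnj (\<psi> x) + complex_of_real 1 * cnj (\<psi>' x))"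
        unfolding \<phi>'_def by (intro tendsto_intros lim1 lim2)
      then show "(\<lambda>n. f x * \<phi>' n x) \<longlonglongrightarrow> f x * cnj (\<psi>' x)" by simp
    qed
    show "AE x in lborel. norm (f x * \<phi>' n x) \<le> 4 * (cmod (f x) * cmod (\<psi> x)) + cmod (f x) * cmod (\<psi>' x)" for n
    proof (rule AE_I2)
      fix x
      have "\<bar>chi' (x / N n)\<bar> / N n \<le> \<bar>chi' (x / N n)\<bar> / 1"
        by (rule divide_left_mono) (use Npos[of n] in auto)
      then have a: "\<bar>chi' (x / N n) / N n\<bar> \<le> 4"
        using chi'_bnd[of "x / N n"] by (simp add: abs_divide aN)
      have b: "\<bar>chi (x / N n)\<bar> \<le> 1" using chi_bnd[of "x / N n"] by simp
      have "norm (\<phi>' n x) \<le> \<bar>chi' (x / N n) / N n\<bar> * cmod (\<psi> x) + \<bar>chi (x / N n)\<bar> * cmod (\<psi>' x)"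
        unfolding \<phi>'_def by (rule order.trans[OF norm_triangle_ineq]) (simp add: norm_mult norm_divide aN)
      also have "\<dots> \<le> 4 * cmod (\<psi> x) + 1 * cmod (\<psi>' x)"
        by (intro add_mono mult_right_mono a b) auto
      finally have "norm (\<phi>' n x) \<le> 4 * cmod (\<psi> x) + cmod (\<psi>' x)" by simp
      then have "cmod (f x) * norm (\<phi>' n x) \<le> cmod (f x) * (4 * cmod (\<psi> x) + cmod (\<psi>' x))"
        by (rule mult_left_mono) simp
      then show "norm (f x * \<phi>' n x) \<le> 4 * (cmod (f x) * cmod (\<psi> x)) + cmod (f x) * cmod (\<psi>' x)"
        by (simp add: norm_mult algebra_simps)
    qed
  qed
  have c2: "(\<lambda>n. LINT x|lborel. \<i> * w x * \<phi> n x) \<longlonglongrightarrow> (LINT x|lborel. \<i> * w x * cnj (\<psi> x))"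
  proof (rule integral_dominated_convergence[where w="\<lambda>x. cmod (w x) * cmod (\<psi> x)"])
    show "(\<lambda>x. \<i> * w x * cnj (\<psi> x)) \<in> borel_measurable lborel" using mw mc mc' by measurable
    show "(\<lambda>x. \<i> * w x * \<phi> n x) \<in> borel_measurable lborel" for n
      unfolding \<phi>_def using mw mc mc' mchi by measurable
    show "integrable lborel (\<lambda>x. cmod (w x) * cmod (\<psi> x))"
      using L2_prod_norm[OF Lw L\<psi>] by auto
    show "AE x in lborel. (\<lambda>n. \<i> * w x * \<phi> n x) \<longlonglongrightarrow> \<i> * w x * cnj (\<psi> x)"
    proof (rule AE_I2)
      fix x
      have "(\<lambda>n. \<i> * w x * \<phi> n x) \<longlonglongrightarrow> \<i> * w x * (complex_of_real 1 * cnj (\<psi> x))"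
        unfolding \<phi>_def by (intro tendsto_intros lim2)
      then show "(\<lambda>n. \<i> * w x * \<phi> n x) \<longlonglongrightarrow> \<i> * w x * cnj (\<psi> x)" by simp
    qed
    show "AE x in lborel. norm (\<i> * w x * \<phi> n x) \<le> cmod (w x) * cmod (\<psi> x)" for n
    proof (rule AE_I2)
      fix x
      have b: "\<bar>chi (x / N n)\<bar> \<le> 1" using chi_bnd[of "x / N n"] by simp
      have "cmod (w x) * (\<bar>chi (x / N n)\<bar> * cmod (\<psi> x)) \<le> cmod (w x) * (1 * cmod (\<psi> x))"
        by (intro mult_left_mono mult_right_mono b) auto
      then show "norm (\<i> * w x * \<phi> n x) \<le> cmod (w x) * cmod (\<psi> x)"
        by (simp add: \<phi>_def norm_mult)
    qed
  qed
  have c2': "(\<lambda>n. LINT x|lborel. f x * \<phi>' n x) \<longlonglongrightarrow> - (LINT x|lborel. \<i> * w x * cnj (\<psi> x))"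
    using tendsto_minus[OF c2] by (simp add: eq)
  have E: "(LINT x|lborel. f x * cnj (\<psi>' x)) = - (LINT x|lborel. \<i> * w x * cnj (\<psi> x))"
    using LIMSEQ_unique[OF c1 c2'] .
  have "(LINT x|lborel. cnj (f x) * \<psi>' x) = cnj (LINT x|lborel. f x * cnj (\<psi>' x))"
    unfolding Bochner_Integration.integral_cnj[symmetric] by simp
  also have "\<dots> = - cnj (LINT x|lborel. \<i> * w x * cnj (\<psi> x))" by (simp add: E)
  also have "\<dots> = - (LINT x|lborel. cnj (\<i> * w x * cnj (\<psi> x)))" unfolding Bochner_Integration.integral_cnj[symmetric] by simp
  also have "\<dots> = - (LINT x|lborel. (-\<i>) * (cnj (w x) * \<psi> x))" by (simp add: mult.assoc)
  also have "\<dots> = \<i> * (LINT x|lborel. cnj (w x) * \<psi> x)" by (subst integral_mult_right_zero) simp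
  finally have F: "(LINT x|lborel. cnj (f x) * \<psi>' x) = \<i> * (LINT x|lborel. cnj (w x) * \<psi> x)" .
  have "(LINT x|lborel. cnj (f x) * (-\<i> * \<psi>' x)) = (-\<i>) * (LINT x|lborel. cnj (f x) * \<psi>' x)"
    by (subst integral_mult_right_zero[symmetric]) (simp add: algebra_simps)
  also have "\<dots> = (LINT x|lborel. cnj (w x) * \<psi> x)" by (simp add: F)
  finally show ?thesis by simp
qed


lemma meas_cnj: "f \<in> borel_measurable M \<Longrightarrow> (\<lambda>x. cnj (f x)) \<in> borel_measurable M"
  by (rule measurable_compose[OF _ borel_measurable_continuous_onI[OF continuous_on_cnj[OF continuous_on_id]]])

lemma t_adj_gf:
  assumes fin: "finite I" and rp: "\<forall>i\<in>I. r i > 0" and od: "\<forall>i\<in>I. oddp (P i)"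
  shows "t_adj (gf I r P) (gf I r (\<lambda>i. Tod (r i) (P i)))"
  unfolding t_adj_def
proof (intro conjI L2_gf fin rp allI impI)
  fix f u assume "t_op f u"
  then obtain w where pw: "p_op f w" and qw: "qinv_op w u" unfolding t_op_def by blast
  have Lf: "L2 f" and Lw: "L2 w" and wd: "weak_deriv f (\<lambda>x. \<i> * w x)" using pw by (auto simp: p_op_def)
  have Lu: "L2 u" and uw: "AE x in lborel. u x = w x / complex_of_real x" using qw by (auto simp: qinv_op_def)
  define \<psi> where "\<psi> = gf I r (\<lambda>i. poly_shift 1 (P i))"
  define \<psi>' where "\<psi>' = (\<lambda>x. gf I r (\<lambda>i. Dop (r i) (poly_shift 1 (P i))) x)"
  have c0: "\<forall>i\<in>I. coeff (P i) 0 = 0" using od by (auto simp: oddp_def)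
  have g: "gf I r P x = complex_of_real x * \<psi> x" for x
    unfolding \<psi>_def by (rule gf_shift[OF c0])
  have k: "gf I r (\<lambda>i. Tod (r i) (P i)) x = -\<i> * \<psi>' x" for x
    unfolding \<psi>'_def Tod_def by (simp add: gf_smult gf_minus)
  have mf: "f \<in> borel_measurable lborel" "w \<in> borel_measurable lborel" "u \<in> borel_measurable lborel"
    using Lf Lw Lu by (auto simp: L2_def)
  have m\<psi>: "\<psi> \<in> borel_measurable lborel" "gf I r P \<in> borel_measurable lborel"
    unfolding \<psi>_def by (rule gf_meas)+
  have "L2inner u (gf I r P) = (LINT x|lborel. cnj (w x) * \<psi> x)"
    unfolding L2inner_def
  proof (rule integral_cong_AE)
    show "(\<lambda>x. cnj (u x) * gf I r P x) \<in> borel_measurable lborel"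
      by (intro borel_measurable_times meas_cnj mf m\<psi>)
    show "(\<lambda>x. cnj (w x) * \<psi> x) \<in> borel_measurable lborel"
      by (intro borel_measurable_times meas_cnj mf m\<psi>)
    show "AE x in lborel. cnj (u x) * gf I r P x = cnj (w x) * \<psi> x"
      using uw AE_lborel_singleton[of 0] by eventually_elim (simp add: g)
  qed
  also have "\<dots> = (LINT x|lborel. cnj (f x) * (-\<i> * \<psi>' x))"
  proof (rule adj_key[OF _ _ _ _ Lf Lw wd])
    show "(\<psi> has_vector_derivative \<psi>' x) (at x)" for x unfolding \<psi>_def \<psi>'_def by (rule gf_deriv)
    show "continuous_on UNIV \<psi>'" unfolding \<psi>'_def by (rule gf_cont)
    show "L2 \<psi>" unfolding \<psi>_def by (rule L2_gf[OF fin rp])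
    show "L2 \<psi>'" unfolding \<psi>'_def by (rule L2_gf[OF fin rp])
  qed
  also have "\<dots> = L2inner f (gf I r (\<lambda>i. Tod (r i) (P i)))"
    unfolding L2inner_def by (simp add: k)
  finally show "L2inner u (gf I r P) = L2inner f (gf I r (\<lambda>i. Tod (r i) (P i)))" .
qed


lemma coeff_Hop: "coeff (Hop e a Q) k = (1/2) * (- complex_of_real e * coeff (Dop a (Dop a Q)) k + (case k of 0 \<Rightarrow> 0 | Suc 0 \<Rightarrow> 0 | Suc (Suc j) \<Rightarrow> coeff Q j))"
  by (simp add: Hop_def coeff_pCons split: nat.split)

lemma comm_ev:
  assumes "evenp Q"
  shows "Hop e a (Tev a Q) - Tev a (Hop e a Q) = smult \<i> (Q + smult (complex_of_real e) (Tev a (Tev a Q)))"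
proof (rule poly_eqI)
  fix k
  have z: "coeff Q (Suc 0) = 0" "coeff Q (Suc (Suc (Suc 0))) = 0" "coeff Q (Suc (Suc (Suc (Suc (Suc 0))))) = 0"
    using assms by (auto simp: evenp_def)
  show "coeff (Hop e a (Tev a Q) - Tev a (Hop e a Q)) k = coeff (smult \<i> (Q + smult (complex_of_real e) (Tev a (Tev a Q)))) k"
  proof (cases k)
    case 0 then show ?thesis
      by (simp add: coeff_Hop Tev_def coeff_Dop coeff_poly_shift algebra_simps)
  next
    case (Suc m)
    show ?thesis
    proof (cases m)
      case 0 then show ?thesis using Suc z
        by (simp add: coeff_Hop Tev_def coeff_Dop coeff_poly_shift algebra_simps)
    next
      case (Suc j) then show ?thesis using \<open>k = Suc m\<close>
        by (simp add: coeff_Hop Tev_def coeff_Dop coeff_poly_shift field_simps)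
    qed
  qed
qed

lemma comm_od:
  assumes "oddp Q"
  shows "Hop e a (Tod a Q) - Tod a (Hop e a Q) = smult \<i> (Q + smult (complex_of_real e) (Tod a (Tod a Q)))"
proof (rule poly_eqI)
  fix k
  have z: "coeff Q 0 = 0" "coeff Q (Suc (Suc 0)) = 0" "coeff Q (Suc (Suc (Suc (Suc 0)))) = 0" "coeff Q (Suc (Suc (Suc (Suc (Suc (Suc 0)))))) = 0"
    using assms by (auto simp: oddp_def)
  show "coeff (Hop e a (Tod a Q) - Tod a (Hop e a Q)) k = coeff (smult \<i> (Q + smult (complex_of_real e) (Tod a (Tod a Q)))) k"
  proof (cases k)
    case 0 then show ?thesis using z
      by (simp add: coeff_Hop Tod_def coeff_Dop coeff_poly_shift field_simps)
  next
    case (Suc m)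
    show ?thesis
    proof (cases m)
      case 0 then show ?thesis using Suc
        by (simp add: coeff_Hop Tod_def coeff_Dop coeff_poly_shift field_simps)
    next
      case (Suc j)
      have cj: "(case j of 0 \<Rightarrow> 0 | Suc x \<Rightarrow> coeff (poly_shift (Suc 0) Q) x) = coeff Q j"
        using z by (cases j) (simp_all add: coeff_poly_shift)
      show ?thesis using \<open>k = Suc m\<close> Suc
        by (simp add: coeff_Hop Tod_def coeff_Dop coeff_poly_shift field_simps cj)
    qed
  qed
qed

lemma evenp_Hop: "evenp Q \<Longrightarrow> evenp (Hop e a Q)"
  unfolding evenp_def
proof (intro allI impI)
  fix k :: nat assume ev: "\<forall>k. odd k \<longrightarrow> coeff Q k = 0" and k: "odd k"
  then obtain j where j: "k = Suc (2 * j)" by (metis oddE Suc_eq_plus1)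
  show "coeff (Hop e a Q) k = 0"
  proof (cases j)
    case 0 then show ?thesis using ev j by (simp add: coeff_Hop coeff_Dop)
  next
    case (Suc i)
    have "odd (Suc (2*i))" "odd (Suc (Suc (Suc (2*i))))" "odd (Suc (Suc (Suc (Suc (Suc (2*i))))))" by auto
    then show ?thesis using ev j Suc by (simp add: coeff_Hop coeff_Dop)
  qed
qed

lemma oddp_Hop: "oddp Q \<Longrightarrow> oddp (Hop e a Q)"
  unfolding oddp_def
proof (intro allI impI)
  fix k :: nat assume ev: "\<forall>k. even k \<longrightarrow> coeff Q k = 0" and k: "even k"
  then obtain j where j: "k = 2 * j" by (metis evenE)
  show "coeff (Hop e a Q) k = 0"
  proof (cases j)
    case 0 then show ?thesis using ev j by (simp add: coeff_Hop coeff_Dop)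
  next
    case (Suc i)
    have "even (2*i)" "even (Suc (Suc (2*i)))" "even (Suc (Suc (Suc (Suc (2*i)))))" by auto
    then show ?thesis using ev j Suc by (simp add: coeff_Hop coeff_Dop)
  qed
qed


locale opT =
  fixes T :: "complex poly \<Rightarrow> complex poly" and C :: "complex poly \<Rightarrow> bool"
    and H :: "complex poly \<Rightarrow> complex poly"
    and lam :: complex and mu :: "nat \<Rightarrow> complex" and s :: real
  assumes T_add: "T (X + Y) = T X + T Y"
    and T_smult: "T (smult c X) = smult c (T X)"
    and H_add: "H (X + Y) = H X + H Y"
    and H_smult: "H (smult c X) = smult c (H X)"
    and C_T: "C X \<Longrightarrow> C (T X)"
    and C_H: "C X \<Longrightarrow> C (H X)"
    and coeff_T: "C X \<Longrightarrow> coeff (T X) k = lam * coeff X k + mu k * coeff X (k+2)"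
    and mu_bnd: "cmod (mu k) \<le> real k + 2"
    and s_pos: "s > 0"
    and lam_bnd: "s * cmod lam < 1"
    and comm: "C X \<Longrightarrow> H (T X) - T (H X) = smult \<i> (X + smult (complex_of_real (s\<^sup>2)) (T (T X)))"
    and H_cont: "(\<And>k. (\<lambda>N. coeff (Z N) k) \<longlonglongrightarrow> coeff Z0 k) \<Longrightarrow> (\<lambda>N. coeff (H (Z N)) k) \<longlonglongrightarrow> coeff (H Z0) k"
begin

lemma T_0: "T 0 = 0" using T_smult[of 0 0] by simp
lemma H_0: "H 0 = 0" using H_smult[of 0 0] by simp
lemma T_minus: "T (- X) = - T X" using T_smult[of "-1" X] by simp
lemma H_minus: "H (- X) = - H X" using H_smult[of "-1" X] by simp
lemma T_diff: "T (X - Y) = T X - T Y" using T_add[of X "-Y"] by (simp add: T_minus)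
lemma H_diff: "H (X - Y) = H X - H Y" using H_add[of X "-Y"] by (simp add: H_minus)
lemma T_sum: "T (\<Sum>n\<in>N. X n) = (\<Sum>n\<in>N. T (X n))"
  by (induction N rule: infinite_finite_induct) (auto simp: T_add T_0)
lemma H_sum: "H (\<Sum>n\<in>N. X n) = (\<Sum>n\<in>N. H (X n))"
  by (induction N rule: infinite_finite_induct) (auto simp: H_add H_0)
lemma Tpow_add: "(T^^m) (X + Y) = (T^^m) X + (T^^m) Y"
  by (induction m) (auto simp: T_add)
lemma Tpow_smult: "(T^^m) (smult c X) = smult c ((T^^m) X)"
  by (induction m) (auto simp: T_smult)
lemma C_Tpow: "C X \<Longrightarrow> C ((T^^m) X)"
  by (induction m) (auto intro: C_T)

lemma degree_T:
  assumes "C X" "degree X \<le> d"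
  shows "degree (T X) \<le> d"
proof (rule degree_le, intro allI impI)
  fix k assume "d < k"
  then have "coeff X k = 0" "coeff X (k+2) = 0" using assms(2) by (auto intro!: coeff_eq_0)
  then show "coeff (T X) k = 0" by (simp add: coeff_T[OF assms(1)])
qed

lemma degree_Tpow: "C X \<Longrightarrow> degree ((T^^m) X) \<le> degree X"
proof (induction m)
  case 0 then show ?case by simp
next
  case (Suc m) then show ?case using degree_T[OF C_Tpow[OF Suc.prems, of m]] by simp
qed

definition W :: "real \<Rightarrow> nat \<Rightarrow> complex poly \<Rightarrow> real" where
  "W R d Y = (\<Sum>k\<le>d. cmod (coeff Y k) * R^k)"

lemma shift_sum_le:
  fixes g :: "nat \<Rightarrow> real"
  assumes "\<And>j. 0 \<le> g j" "\<And>j. j > d \<Longrightarrow> g j = 0"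
  shows "(\<Sum>k\<le>d. g (k+2)) \<le> (\<Sum>k\<le>d. g k)"
proof -
  have "(\<Sum>k\<le>d. g (k+2)) = (\<Sum>j\<in>(\<lambda>k. k+2) ` {..d}. g j)"
    by (subst sum.reindex) (auto simp: inj_on_def)
  also have "\<dots> \<le> (\<Sum>j\<le>d+2. g j)"
    by (rule sum_mono2) (auto simp: assms(1))
  also have "\<dots> = (\<Sum>j\<le>d. g j)"
    by (rule sum.mono_neutral_right) (auto simp: assms(2))
  finally show ?thesis .
qed

lemma W_T:
  assumes CY: "C Y" and dY: "degree Y \<le> d" and R: "R \<ge> 1"
  shows "W R d (T Y) \<le> (cmod lam + (real d + 2) / R\<^sup>2) * W R d Y"
proof -
  have Rp: "R > 0" using R by simp
  have "W R d (T Y) \<le> (\<Sum>k\<le>d. cmod lam * (cmod (coeff Y k) * R^k) + (real d + 2) / R\<^sup>2 * (cmod (coeff Y (k+2)) * R^(k+2)))"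
    unfolding W_def
  proof (rule sum_mono)
    fix k assume k: "k \<in> {..d}"
    have "cmod (coeff (T Y) k) \<le> cmod lam * cmod (coeff Y k) + cmod (mu k) * cmod (coeff Y (k+2))"
      unfolding coeff_T[OF CY] by (rule order.trans[OF norm_triangle_ineq]) (simp add: norm_mult)
    also have "\<dots> \<le> cmod lam * cmod (coeff Y k) + (real k + 2) * cmod (coeff Y (k+2))"
      by (intro add_left_mono mult_right_mono mu_bnd) simp
    finally have 1: "cmod (coeff (T Y) k) * R^k \<le> (cmod lam * cmod (coeff Y k) + (real k + 2) * cmod (coeff Y (k+2))) * R^k"
      by (rule mult_right_mono) (use Rp in simp)
    have "(real k + 2) * cmod (coeff Y (k+2)) * R^k \<le> (real d + 2) * cmod (coeff Y (k+2)) * R^k"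
      by (intro mult_right_mono) (use k Rp in auto)
    also have "\<dots> = (real d + 2) / R\<^sup>2 * (cmod (coeff Y (k+2)) * R^(k+2))"
      using Rp by (simp add: power_add field_simps power2_eq_square)
    finally have 2: "(real k + 2) * cmod (coeff Y (k+2)) * R^k \<le> (real d + 2) / R\<^sup>2 * (cmod (coeff Y (k+2)) * R^(k+2))" .
    show "cmod (coeff (T Y) k) * R^k \<le> cmod lam * (cmod (coeff Y k) * R^k) + (real d + 2) / R\<^sup>2 * (cmod (coeff Y (k+2)) * R^(k+2))"
      using 1 2 by (simp add: algebra_simps)
  qed
  also have "\<dots> = cmod lam * W R d Y + (real d + 2) / R\<^sup>2 * (\<Sum>k\<le>d. cmod (coeff Y (k+2)) * R^(k+2))"
    by (simp add: W_def sum.distrib sum_distrib_left)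
  also have "(\<Sum>k\<le>d. cmod (coeff Y (k+2)) * R^(k+2)) \<le> W R d Y"
    unfolding W_def
    by (rule shift_sum_le[where g="\<lambda>j. cmod (coeff Y j) * R^j"]) (use Rp dY in \<open>auto simp: coeff_eq_0\<close>)
  then have "(real d + 2) / R\<^sup>2 * (\<Sum>k\<le>d. cmod (coeff Y (k+2)) * R^(k+2)) \<le> (real d + 2) / R\<^sup>2 * W R d Y"
    by (rule mult_left_mono) (use Rp in simp)
  finally show ?thesis by (simp add: algebra_simps)
qed

lemma W_nonneg: "R \<ge> 0 \<Longrightarrow> W R d Y \<ge> 0"
  unfolding W_def by (intro sum_nonneg) simp

lemma coeff_le_W:
  assumes "k \<le> d" "R \<ge> 1"
  shows "cmod (coeff Y k) \<le> W R d Y"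
proof -
  have "cmod (coeff Y k) \<le> cmod (coeff Y k) * R^k"
    using assms(2) by (simp add: mult_le_cancel_left1 one_le_power)
  also have "\<dots> \<le> W R d Y" unfolding W_def
    by (rule member_le_sum) (use assms in auto)
  finally show ?thesis .
qed

lemma decay:
  assumes CX: "C X"
  obtains B \<rho> where "0 \<le> B" "0 \<le> \<rho>" "\<rho> < 1" "\<And>m k. s^m * cmod (coeff ((T^^m) X) k) \<le> B * \<rho>^m"
proof -
  define d where "d = degree X"
  define \<delta> where "\<delta> = (1 - s * cmod lam) / 2"
  have \<delta>: "\<delta> > 0" using lam_bnd by (simp add: \<delta>_def)
  define R where "R = 1 + s * (real d + 2) / \<delta>"
  have R1: "R \<ge> 1" using s_pos \<delta> by (simp add: R_def)
  have "s * (real d + 2) / \<delta> \<le> R" by (simp add: R_def)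
  also have "R \<le> R\<^sup>2" using R1 by (simp add: power2_eq_square)
  finally have "s * (real d + 2) \<le> \<delta> * R\<^sup>2" using \<delta> by (simp add: divide_le_eq mult.commute)
  then have sR: "s * ((real d + 2) / R\<^sup>2) \<le> \<delta>" using R1 by (simp add: field_simps)
  define \<rho> where "\<rho> = s * cmod lam + \<delta>"
  have \<rho>0: "0 \<le> \<rho>" using \<delta> s_pos by (simp add: \<rho>_def)
  have \<rho>1: "\<rho> < 1" using lam_bnd unfolding \<rho>_def \<delta>_def by (simp add: field_simps)
  note \<rho> = \<rho>0 \<rho>1
  have step: "s * W R d (T Y) \<le> \<rho> * W R d Y" if "C Y" "degree Y \<le> d" for Y
  proof -
    have "s * W R d (T Y) \<le> s * ((cmod lam + (real d + 2) / R\<^sup>2) * W R d Y)"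
      by (rule mult_left_mono[OF W_T[OF that R1]]) (use s_pos in simp)
    also have "\<dots> = (s * cmod lam + s * ((real d + 2) / R\<^sup>2)) * W R d Y" by (simp add: algebra_simps)
    also have "\<dots> \<le> \<rho> * W R d Y"
      by (rule mult_right_mono) (use sR W_nonneg[of R] R1 in \<open>auto simp: \<rho>_def\<close>)
    finally show ?thesis .
  qed
  have pw: "s^m * W R d ((T^^m) X) \<le> \<rho>^m * W R d X" for m
  proof (induction m)
    case 0 then show ?case by simp
  next
    case (Suc m)
    have "s^(Suc m) * W R d ((T^^Suc m) X) = s^m * (s * W R d (T ((T^^m) X)))" by simp
    also have "\<dots> \<le> s^m * (\<rho> * W R d ((T^^m) X))"
      by (rule mult_left_mono[OF step]) (use C_Tpow[OF CX] degree_Tpow[OF CX] s_pos in \<open>auto simp: d_def\<close>)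
    also have "\<dots> = \<rho> * (s^m * W R d ((T^^m) X))" by (simp add: algebra_simps)
    also have "\<dots> \<le> \<rho> * (\<rho>^m * W R d X)" by (rule mult_left_mono[OF Suc.IH \<rho>(1)])
    finally show ?case by simp
  qed
  show ?thesis
  proof (rule that[of "W R d X" \<rho>])
    show "0 \<le> W R d X" using R1 by (simp add: W_nonneg)
    show "0 \<le> \<rho>" "\<rho> < 1" by (rule \<rho>)+
    fix m k
    show "s^m * cmod (coeff ((T^^m) X) k) \<le> W R d X * \<rho>^m"
    proof (cases "k \<le> d")
      case True
      have "s^m * cmod (coeff ((T^^m) X) k) \<le> s^m * W R d ((T^^m) X)"
        by (rule mult_left_mono[OF coeff_le_W[OF True R1]]) (use s_pos in simp)
      also have "\<dots> \<le> \<rho>^m * W R d X" by (rule pw)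
      finally show ?thesis by (simp add: mult.commute)
    next
      case False
      then have "coeff ((T^^m) X) k = 0"
        using degree_Tpow[OF CX, of m] by (intro coeff_eq_0) (simp add: d_def)
      then show ?thesis using R1 \<rho> by (simp add: W_nonneg)
    qed
  qed
qed

end


context opT begin

definition cc :: "nat \<Rightarrow> complex" where
  "cc n = complex_of_real ((-1)^n / real (2*n+1) * s^(2*n+1))"
definition Ap :: "nat \<Rightarrow> complex poly \<Rightarrow> complex poly" where
  "Ap N X = (\<Sum>n\<le>N. smult (cc n) ((T^^(2*n+1)) X))"
definition Lim :: "complex poly \<Rightarrow> complex poly" where
  "Lim X = (\<Sum>k\<le>degree X. monom (\<Sum>n. cc n * coeff ((T^^(2*n+1)) X) k) k)"

lemma coeff_Ap: "coeff (Ap N X) k = (\<Sum>n\<le>N. cc n * coeff ((T^^(2*n+1)) X) k)"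
  by (simp add: Ap_def coeff_sum)

lemma coeff_Lim: "coeff (Lim X) k = (if k \<le> degree X then (\<Sum>n. cc n * coeff ((T^^(2*n+1)) X) k) else 0)"
  by (simp add: Lim_def coeff_sum coeff_monom)

lemma degree_Lim: "degree (Lim X) \<le> degree X"
  by (rule degree_le) (simp add: coeff_Lim)

lemma degree_Ap: "C X \<Longrightarrow> degree (Ap N X) \<le> degree X"
proof (rule degree_le, intro allI impI)
  fix i assume "C X" "degree X < i"
  then have "coeff ((T^^m) X) i = 0" for m using degree_Tpow[of X m] by (intro coeff_eq_0) simp
  then show "coeff (Ap N X) i = 0" by (simp add: coeff_Ap del: funpow.simps)
qed

lemma cc_bnd: "cmod (cc n) \<le> s^(2*n+1)"
proof -
  have "cmod (cc n) = \<bar>(-1)^n / real (2*n+1) * s^(2*n+1)\<bar>"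
    by (simp only: cc_def norm_of_real)
  also have "\<dots> = s^(2*n+1) / real (2*n+1)"
    using s_pos by (simp add: abs_mult power_abs)
  also have "\<dots> \<le> s^(2*n+1) / 1" by (rule divide_left_mono) (use s_pos in auto)
  finally show ?thesis by simp
qed

lemma summable_coeff:
  assumes CX: "C X"
  shows "summable (\<lambda>n. cc n * coeff ((T^^(2*n+1)) X) k)"
proof -
  obtain B \<rho> where B: "0 \<le> B" "0 \<le> \<rho>" "\<rho> < 1" "\<And>m k. s^m * cmod (coeff ((T^^m) X) k) \<le> B * \<rho>^m"
    using decay[OF CX] by blast
  show ?thesis
  proof (rule summable_comparison_test[where g="\<lambda>n. B * \<rho>^n"])
    have "norm (cc n * coeff ((T^^(2*n+1)) X) k) \<le> B * \<rho>^n" for n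
    proof -
      have "norm (cc n * coeff ((T^^(2*n+1)) X) k) \<le> s^(2*n+1) * cmod (coeff ((T^^(2*n+1)) X) k)"
        unfolding norm_mult by (rule mult_right_mono[OF cc_bnd]) simp
      also have "\<dots> \<le> B * \<rho>^(2*n+1)" by (rule B(4))
      also have "\<rho>^(2*n+1) \<le> \<rho>^n" by (rule power_decreasing) (use B in auto)
      then have "B * \<rho>^(2*n+1) \<le> B * \<rho>^n" by (rule mult_left_mono) (use B in auto)
      finally show ?thesis .
    qed
    then show "\<exists>N. \<forall>n\<ge>N. norm (cc n * coeff ((T^^(2*n+1)) X) k) \<le> B * \<rho>^n" by blast
    show "summable (\<lambda>n. B * \<rho>^n)" using B by (intro summable_mult summable_geometric) simp
  qed
qed

lemma conv:
  assumes CX: "C X"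
  shows "(\<lambda>N. coeff (Ap N X) k) \<longlonglongrightarrow> coeff (Lim X) k"
proof (cases "k \<le> degree X")
  case True then show ?thesis unfolding coeff_Ap coeff_Lim using summable_LIMSEQ'[OF summable_coeff[OF CX]] by simp
next
  case False
  then have "coeff ((T^^m) X) k = 0" for m using degree_Tpow[OF CX, of m] by (intro coeff_eq_0) simp
  then show ?thesis using False by (simp add: coeff_Ap coeff_Lim del: funpow.simps)
qed

lemma tail0:
  assumes CX: "C X"
  shows "(\<lambda>N. complex_of_real (s^(2*N+2)) * coeff ((T^^(2*N+2)) X) k) \<longlonglongrightarrow> 0"
proof -
  obtain B \<rho> where B: "0 \<le> B" "0 \<le> \<rho>" "\<rho> < 1" "\<And>m k. s^m * cmod (coeff ((T^^m) X) k) \<le> B * \<rho>^m"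
    using decay[OF CX] by blast
  show ?thesis
  proof (rule Lim_null_comparison)
    have "norm (complex_of_real (s^(2*N+2)) * coeff ((T^^(2*N+2)) X) k) \<le> B * \<rho>^N" for N
    proof -
      have "norm (complex_of_real (s^(2*N+2)) * coeff ((T^^(2*N+2)) X) k) = s^(2*N+2) * cmod (coeff ((T^^(2*N+2)) X) k)"
        using s_pos by (simp only: norm_mult norm_of_real abs_of_nonneg[OF zero_le_power[OF less_imp_le[OF s_pos]]])
      also have "\<dots> \<le> B * \<rho>^(2*N+2)" by (rule B(4))
      also have "\<rho>^(2*N+2) \<le> \<rho>^N" by (rule power_decreasing) (use B in auto)
      then have "B * \<rho>^(2*N+2) \<le> B * \<rho>^N" by (rule mult_left_mono) (use B in auto)
      finally show ?thesis .
    qed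
    then show "\<forall>\<^sub>F N in sequentially. norm (complex_of_real (s^(2*N+2)) * coeff ((T^^(2*N+2)) X) k) \<le> B * \<rho>^N" by simp
    show "(\<lambda>N. B * \<rho>^N) \<longlonglongrightarrow> 0"
      using tendsto_mult_right_zero[OF LIMSEQ_power_zero[of \<rho>]] B by simp
  qed
qed

lemma comm_pow:
  assumes CX: "C X"
  shows "H ((T^^Suc m) X) - (T^^Suc m) (H X) = smult (\<i> * of_nat (Suc m)) ((T^^m) X + smult (complex_of_real (s\<^sup>2)) ((T^^Suc (Suc m)) X))"
proof (induction m)
  case 0 show ?case using comm[OF CX] by simp
next
  case (Suc m)
  define Y where "Y = (T^^Suc m) X"
  have CY: "C Y" unfolding Y_def by (rule C_Tpow[OF CX])
  define Z where "Z = smult (\<i> * of_nat (Suc m)) ((T^^m) X + smult (complex_of_real (s\<^sup>2)) ((T^^Suc (Suc m)) X))"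
  have ih: "H Y = (T^^Suc m) (H X) + Z" using Suc.IH unfolding Y_def Z_def by (simp add: algebra_simps)
  have c: "H (T Y) = T (H Y) + smult \<i> (Y + smult (complex_of_real (s\<^sup>2)) (T (T Y)))"
    using comm[OF CY] by (simp add: algebra_simps)
  have TZ: "T Z = smult (\<i> * of_nat (Suc m)) (Y + smult (complex_of_real (s\<^sup>2)) (T (T Y)))"
    unfolding Z_def Y_def by (simp add: T_add T_smult)
  have "H ((T^^Suc (Suc m)) X) - (T^^Suc (Suc m)) (H X) = H (T Y) - T ((T^^Suc m) (H X))"
    by (simp add: Y_def)
  also have "\<dots> = T Z + smult \<i> (Y + smult (complex_of_real (s\<^sup>2)) (T (T Y)))"
    by (simp add: c ih T_add)
  also have "\<dots> = smult (\<i> * of_nat (Suc (Suc m))) (Y + smult (complex_of_real (s\<^sup>2)) (T (T Y)))"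
    unfolding TZ by (simp add: smult_add_left[symmetric] algebra_simps)
  also have "\<dots> = smult (\<i> * of_nat (Suc (Suc m))) ((T^^Suc m) X + smult (complex_of_real (s\<^sup>2)) ((T^^Suc (Suc (Suc m))) X))"
    by (simp add: Y_def)
  finally show ?case .
qed

end

context opT begin

lemma Ap_Suc: "Ap (Suc N) X = Ap N X + smult (cc (Suc N)) ((T^^(2*Suc N+1)) X)"
  unfolding Ap_def by (simp only: sum.atMost_Suc)

lemma key_sc: "cc (Suc N) * (\<i> * of_nat (2*N+3)) = - (\<i> * (complex_of_real s * (-1)^N * complex_of_real (s^(2*N+2))))"
proof -
  have r: "(-1)^(Suc N) / real (2*Suc N+1) * s^(2*Suc N+1) * real (2*N+3) = - (s * (-1)^N * s^(2*N+2))"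
  proof -
    have nz: "real (2*Suc N+1) \<noteq> 0" by simp
    have "2*Suc N+1 = Suc (2*N+2)" by simp
    then show ?thesis using nz by (simp add: field_simps)
  qed
  have "cc (Suc N) * of_nat (2*N+3) = complex_of_real ((-1)^(Suc N) / real (2*Suc N+1) * s^(2*Suc N+1) * real (2*N+3))"
    unfolding cc_def by simp
  also have "\<dots> = - (complex_of_real s * (-1)^N * complex_of_real (s^(2*N+2)))" unfolding r by simp
  finally have "cc (Suc N) * of_nat (2*N+3) = - (complex_of_real s * (-1)^N * complex_of_real (s^(2*N+2)))" .
  then show ?thesis by (simp only: mult.left_commute[of "cc (Suc N)"]) simp
qed

lemma Ap_comm:
  assumes CX: "C X"
  shows "H (Ap N X) - Ap N (H X) = smult (\<i> * complex_of_real s) (X + smult (complex_of_real ((-1)^N * s^(2*N+2))) ((T^^(2*N+2)) X))"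
proof (induction N)
  case 0
  have "H (Ap 0 X) - Ap 0 (H X) = smult (cc 0) (H (T X) - T (H X))"
    by (simp add: Ap_def H_smult smult_diff_right)
  also have "\<dots> = smult (cc 0) (smult \<i> (X + smult (complex_of_real (s\<^sup>2)) (T (T X))))" using comm[OF CX] by simp
  finally show ?case by (simp add: cc_def smult_add_right power2_eq_square algebra_simps)
next
  case (Suc N)
  define U where "U = (T^^(2*N+2)) X"
  define V where "V = (T^^(2*N+4)) X"
  have e1: "2*Suc N+1 = Suc (2*N+2)" "Suc (Suc (2*N+2)) = 2*N+4" by simp_all
  have cp: "H ((T^^(2*Suc N+1)) X) - (T^^(2*Suc N+1)) (H X) = smult (\<i> * of_nat (2*N+3)) (U + smult (complex_of_real (s\<^sup>2)) V)"
    using comm_pow[OF CX, of "2*N+2"] unfolding e1 U_def V_def by (simp add: algebra_simps)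
  have "H (Ap (Suc N) X) - Ap (Suc N) (H X) = (H (Ap N X) - Ap N (H X)) + smult (cc (Suc N)) (H ((T^^(2*Suc N+1)) X) - (T^^(2*Suc N+1)) (H X))"
    unfolding Ap_Suc H_add H_smult by (simp add: smult_diff_right)
  also have "\<dots> = smult (\<i> * complex_of_real s) (X + smult (complex_of_real ((-1)^N * s^(2*N+2))) U)
      + smult (- (\<i> * (complex_of_real s * (-1)^N * complex_of_real (s^(2*N+2))))) (U + smult (complex_of_real (s\<^sup>2)) V)"
    unfolding Suc.IH cp smult_smult key_sc U_def ..
  also have "\<dots> = smult (\<i> * complex_of_real s) (X + smult (complex_of_real ((-1)^(Suc N) * s^(2*Suc N+2))) V)"
  proof -
    have pw: "s^(2*Suc N+2) = s^(2*N+2) * s\<^sup>2"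
    proof -
      have "2*Suc N+2 = (2*N+2)+2" by simp
      then show ?thesis by (simp only: power_add)
    qed
    show ?thesis unfolding pw
      by (rule poly_eqI) (simp add: algebra_simps)
  qed
  finally have fin: "H (Ap (Suc N) X) - Ap (Suc N) (H X) = smult (\<i> * complex_of_real s) (X + smult (complex_of_real ((-1)^(Suc N) * s^(2*Suc N+2))) V)" .
  have e4: "2 * Suc N + 2 = 2*N+4" by simp
  show ?case using fin unfolding V_def e4 .
qed

lemma comm_lim:
  assumes CX: "C X"
  shows "H (Lim X) - Lim (H X) = smult (\<i> * complex_of_real s) X"
proof (rule poly_eqI)
  fix k
  have a1: "(\<lambda>N. coeff (H (Ap N X)) k) \<longlonglongrightarrow> coeff (H (Lim X)) k"
    by (rule H_cont) (rule conv[OF CX])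
  have a2: "(\<lambda>N. coeff (Ap N (H X)) k) \<longlonglongrightarrow> coeff (Lim (H X)) k"
    by (rule conv[OF C_H[OF CX]])
  have a3: "(\<lambda>N. coeff (H (Ap N X) - Ap N (H X)) k) \<longlonglongrightarrow> coeff (H (Lim X)) k - coeff (Lim (H X)) k"
    using tendsto_diff[OF a1 a2] by simp
  define t where "t N = complex_of_real (s^(2*N+2)) * coeff ((T^^(2*N+2)) X) k" for N
  have e: "coeff (H (Ap N X) - Ap N (H X)) k = \<i> * complex_of_real s * coeff X k + \<i> * complex_of_real s * ((-1)^N * t N)" for N
    unfolding Ap_comm[OF CX] t_def by (simp add: algebra_simps)
  have t0: "t \<longlonglongrightarrow> 0" unfolding t_def by (rule tail0[OF CX])
  have "(\<lambda>N. (-1)^N * t N) \<longlonglongrightarrow> 0"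
    by (rule tendsto_norm_zero_cancel) (use tendsto_norm_zero[OF t0] in \<open>simp add: norm_mult norm_power\<close>)
  then have a4: "(\<lambda>N. coeff (H (Ap N X) - Ap N (H X)) k) \<longlonglongrightarrow> \<i> * complex_of_real s * coeff X k + \<i> * complex_of_real s * 0"
    unfolding e by (intro tendsto_intros)
  from LIMSEQ_unique[OF a3 a4] show "coeff (H (Lim X) - Lim (H X)) k = coeff (smult (\<i> * complex_of_real s) X) k"
    by simp
qed

end

lemma poly_shift_add: "poly_shift n (p + q) = poly_shift n p + poly_shift n q"
  by (rule poly_eqI) (simp add: coeff_poly_shift)
lemma poly_shift_smult: "poly_shift n (smult c p) = smult c (poly_shift n p)"
  by (rule poly_eqI) (simp add: coeff_poly_shift)

lemma Hop_add: "Hop e a (X + Y) = Hop e a X + Hop e a Y"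
  by (rule poly_eqI) (simp add: coeff_Hop coeff_Dop algebra_simps split: nat.split)
lemma Hop_smult: "Hop e a (smult c X) = smult c (Hop e a X)"
  by (rule poly_eqI) (simp add: coeff_Hop coeff_Dop algebra_simps split: nat.split)

lemma Dop_cont:
  assumes "\<And>k. (\<lambda>N. coeff (Z N) k) \<longlonglongrightarrow> coeff Z0 k"
  shows "(\<lambda>N. coeff (Dop a (Z N)) k) \<longlonglongrightarrow> coeff (Dop a Z0) k"
proof (cases k)
  case 0 then show ?thesis unfolding coeff_Dop by (simp add: assms tendsto_intros)
next
  case (Suc j) then show ?thesis unfolding coeff_Dop by (simp, intro tendsto_intros assms)
qed

lemma Hop_cont:
  assumes "\<And>k. (\<lambda>N. coeff (Z N) k) \<longlonglongrightarrow> coeff Z0 k"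
  shows "(\<lambda>N. coeff (Hop e a (Z N)) k) \<longlonglongrightarrow> coeff (Hop e a Z0) k"
proof -
  have d: "(\<lambda>N. coeff (Dop a (Dop a (Z N))) k) \<longlonglongrightarrow> coeff (Dop a (Dop a Z0)) k" for k
    by (intro Dop_cont assms)
  show ?thesis
  proof (cases k)
    case 0 then show ?thesis unfolding coeff_Hop by (auto intro!: tendsto_intros d)
  next
    case (Suc m) then show ?thesis
      by (cases m) (auto simp: coeff_Hop intro!: tendsto_intros d assms)
  qed
qed

lemma Tev_add: "Tev a (X + Y) = Tev a X + Tev a Y"
  by (rule poly_eqI) (simp add: coeff_Tev algebra_simps)
lemma Tev_smult: "Tev a (smult c X) = smult c (Tev a X)"
  by (rule poly_eqI) (simp add: coeff_Tev algebra_simps)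
lemma Tod_add: "Tod a (X + Y) = Tod a X + Tod a Y"
  by (rule poly_eqI) (simp add: Tod_def coeff_Dop coeff_poly_shift algebra_simps split: nat.split)
lemma Tod_smult: "Tod a (smult c X) = smult c (Tod a X)"
  by (rule poly_eqI) (simp add: Tod_def coeff_Dop coeff_poly_shift algebra_simps split: nat.split)

lemma opT_ev:
  assumes "a > 0" "s > 0" "2 * a * s < 1"
  shows "opT (Tev a) evenp (Hop (s\<^sup>2) a) (\<i> * complex_of_real (2*a)) (\<lambda>k. - \<i> * of_nat (k+2)) s"
proof
  fix X Y c k Z Z0
  show "Tev a (X + Y) = Tev a X + Tev a Y" by (rule Tev_add)
  show "Tev a (smult c X) = smult c (Tev a X)" by (rule Tev_smult)
  show "Hop (s\<^sup>2) a (X + Y) = Hop (s\<^sup>2) a X + Hop (s\<^sup>2) a Y" by (rule Hop_add)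
  show "Hop (s\<^sup>2) a (smult c X) = smult c (Hop (s\<^sup>2) a X)" by (rule Hop_smult)
  show "evenp X \<Longrightarrow> evenp (Tev a X)" by (rule evenp_Tev)
  show "evenp X \<Longrightarrow> evenp (Hop (s\<^sup>2) a X)" by (rule evenp_Hop)
  show "evenp X \<Longrightarrow> coeff (Tev a X) k = \<i> * complex_of_real (2*a) * coeff X k + (- \<i> * of_nat (k+2)) * coeff X (k+2)"
    by (simp add: coeff_Tev algebra_simps)
  show "cmod (- \<i> * of_nat (k+2)) \<le> real k + 2" by (simp only: norm_mult norm_minus_cancel norm_ii norm_of_nat) simp
  show "s > 0" by (rule assms)
  show "s * cmod (\<i> * complex_of_real (2*a)) < 1" using assms by (simp add: norm_mult abs_mult mult.commute mult.left_commute)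
  show "evenp X \<Longrightarrow> Hop (s\<^sup>2) a (Tev a X) - Tev a (Hop (s\<^sup>2) a X) = smult \<i> (X + smult (complex_of_real (s\<^sup>2)) (Tev a (Tev a X)))"
    by (rule comm_ev)
  show "(\<And>k. (\<lambda>N. coeff (Z N) k) \<longlonglongrightarrow> coeff Z0 k) \<Longrightarrow> (\<lambda>N. coeff (Hop (s\<^sup>2) a (Z N)) k) \<longlonglongrightarrow> coeff (Hop (s\<^sup>2) a Z0) k"
    by (rule Hop_cont)
qed

lemma opT_od:
  assumes "a > 0" "s > 0" "2 * a * s < 1"
  shows "opT (Tod a) oddp (Hop (s\<^sup>2) a) (\<i> * complex_of_real (2*a)) (\<lambda>k. - \<i> * of_nat (k+1)) s"
proof
  fix X Y c k Z Z0
  show "Tod a (X + Y) = Tod a X + Tod a Y" by (rule Tod_add)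
  show "Tod a (smult c X) = smult c (Tod a X)" by (rule Tod_smult)
  show "Hop (s\<^sup>2) a (X + Y) = Hop (s\<^sup>2) a X + Hop (s\<^sup>2) a Y" by (rule Hop_add)
  show "Hop (s\<^sup>2) a (smult c X) = smult c (Hop (s\<^sup>2) a X)" by (rule Hop_smult)
  show "oddp X \<Longrightarrow> oddp (Tod a X)" by (rule oddp_Tod)
  show "oddp X \<Longrightarrow> oddp (Hop (s\<^sup>2) a X)" by (rule oddp_Hop)
  show "oddp X \<Longrightarrow> coeff (Tod a X) k = \<i> * complex_of_real (2*a) * coeff X k + (- \<i> * of_nat (k+1)) * coeff X (k+2)"
    by (simp add: coeff_Tod oddp_def algebra_simps)
  show "cmod (- \<i> * of_nat (k+1)) \<le> real k + 2" by (simp only: norm_mult norm_minus_cancel norm_ii norm_of_nat) simp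
  show "s > 0" by (rule assms)
  show "s * cmod (\<i> * complex_of_real (2*a)) < 1" using assms by (simp add: norm_mult abs_mult mult.commute mult.left_commute)
  show "oddp X \<Longrightarrow> Hop (s\<^sup>2) a (Tod a X) - Tod a (Hop (s\<^sup>2) a X) = smult \<i> (X + smult (complex_of_real (s\<^sup>2)) (Tod a (Tod a X)))"
    by (rule comm_od)
  show "(\<And>k. (\<lambda>N. coeff (Z N) k) \<longlonglongrightarrow> coeff Z0 k) \<Longrightarrow> (\<lambda>N. coeff (Hop (s\<^sup>2) a (Z N)) k) \<longlonglongrightarrow> coeff (Hop (s\<^sup>2) a Z0) k"
    by (rule Hop_cont)
qed


lemma integral_gbnd:
  assumes "a > 0"
  shows "(LINT x|lborel. gbnd a d Q x) = real (Suc d) * (\<Sum>k\<le>d. (cmod (coeff Q k))\<^sup>2 * (LINT x|lborel. \<bar>x\<bar>^(2*k) * exp (- (2*a * x\<^sup>2))))"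
proof -
  have i: "integrable lborel (\<lambda>x. (cmod (coeff Q k))\<^sup>2 * (\<bar>x\<bar>^(2*k) * exp (- (2*a * x\<^sup>2))))" for k
    by (rule integrable_mult_right, rule integrable_moment) (use assms in simp)
  have "(LINT x|lborel. gbnd a d Q x) = real (Suc d) * (LINT x|lborel. (\<Sum>k\<le>d. (cmod (coeff Q k))\<^sup>2 * (\<bar>x\<bar>^(2*k) * exp (- (2*a * x\<^sup>2)))))"
    unfolding gbnd_def by (rule integral_mult_right_zero)
  also have "(LINT x|lborel. (\<Sum>k\<le>d. (cmod (coeff Q k))\<^sup>2 * (\<bar>x\<bar>^(2*k) * exp (- (2*a * x\<^sup>2))))) = (\<Sum>k\<le>d. (LINT x|lborel. (cmod (coeff Q k))\<^sup>2 * (\<bar>x\<bar>^(2*k) * exp (- (2*a * x\<^sup>2)))))"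
    by (rule Bochner_Integration.integral_sum) (rule i)
  also have "\<dots> = (\<Sum>k\<le>d. (cmod (coeff Q k))\<^sup>2 * (LINT x|lborel. \<bar>x\<bar>^(2*k) * exp (- (2*a * x\<^sup>2))))"
    by (intro sum.cong refl integral_mult_right_zero)
  finally show ?thesis .
qed

lemma integral_gfbnd:
  assumes "\<forall>i\<in>I. r i > 0"
  shows "(LINT x|lborel. gfbnd I r d P x) = real (card I) * (\<Sum>i\<in>I. real (Suc d) * (\<Sum>k\<le>d. (cmod (coeff (P i) k))\<^sup>2 * (LINT x|lborel. \<bar>x\<bar>^(2*k) * exp (- (2*r i * x\<^sup>2)))))"
proof -
  have "(LINT x|lborel. gfbnd I r d P x) = real (card I) * (LINT x|lborel. (\<Sum>i\<in>I. gbnd (r i) d (P i) x))"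
    unfolding gfbnd_def by (rule integral_mult_right_zero)
  also have "(LINT x|lborel. (\<Sum>i\<in>I. gbnd (r i) d (P i) x)) = (\<Sum>i\<in>I. LINT x|lborel. gbnd (r i) d (P i) x)"
    by (rule Bochner_Integration.integral_sum) (use assms in \<open>auto intro: integrable_gbnd\<close>)
  also have "\<dots> = (\<Sum>i\<in>I. real (Suc d) * (\<Sum>k\<le>d. (cmod (coeff (P i) k))\<^sup>2 * (LINT x|lborel. \<bar>x\<bar>^(2*k) * exp (- (2*r i * x\<^sup>2)))))"
    by (intro sum.cong refl integral_gbnd) (use assms in auto)
  finally show ?thesis .
qed

lemma L2norm_gf_tendsto:
  assumes fin: "finite I" and rp: "\<forall>i\<in>I. r i > 0" and dg: "\<And>N i. i \<in> I \<Longrightarrow> degree (E N i) \<le> d"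
    and cv: "\<And>i k. i \<in> I \<Longrightarrow> (\<lambda>N. coeff (E N i) k) \<longlonglongrightarrow> 0"
  shows "(\<lambda>N. L2norm (gf I r (E N))) \<longlonglongrightarrow> 0"
proof (rule Lim_null_comparison)
  define M where "M i k = (LINT x|lborel. \<bar>x\<bar>^(2*k) * exp (- (2*r i * x\<^sup>2)))" for i k
  define G where "G N = real (card I) * (\<Sum>i\<in>I. real (Suc d) * (\<Sum>k\<le>d. (cmod (coeff (E N i) k))\<^sup>2 * M i k))" for N
  have "norm (L2norm (gf I r (E N))) \<le> sqrt (G N)" for N
  proof -
    have "(LINT x|lborel. (cmod (gf I r (E N) x))\<^sup>2) \<le> (LINT x|lborel. gfbnd I r d (E N) x)"
    proof (rule integral_mono)
      show "integrable lborel (\<lambda>x. (cmod (gf I r (E N) x))\<^sup>2)" using L2_gf[OF fin rp] by (simp add: L2_def)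
      show "integrable lborel (gfbnd I r d (E N))" by (rule integrable_gfbnd[OF fin rp])
      show "(cmod (gf I r (E N) x))\<^sup>2 \<le> gfbnd I r d (E N) x" for x by (rule gf_sq_bound) (use dg in auto)
    qed
    also have "\<dots> = G N" unfolding G_def M_def by (rule integral_gfbnd[OF rp])
    finally have le: "(LINT x|lborel. (cmod (gf I r (E N) x))\<^sup>2) \<le> G N" .
    have "norm (L2norm (gf I r (E N))) = L2norm (gf I r (E N))" by (simp add: L2norm_def)
    also have "\<dots> \<le> sqrt (G N)" unfolding L2norm_def by (rule real_sqrt_le_mono[OF le])
    finally show ?thesis .
  qed
  then show "\<forall>\<^sub>F N in sequentially. norm (L2norm (gf I r (E N))) \<le> sqrt (G N)" by simp
  have "G \<longlonglongrightarrow> real (card I) * (\<Sum>i\<in>I. real (Suc d) * (\<Sum>k\<le>d. (cmod 0)\<^sup>2 * M i k))"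
    unfolding G_def by (intro tendsto_intros cv) auto
  then have "G \<longlonglongrightarrow> 0" by simp
  from tendsto_real_sqrt[OF this] show "(\<lambda>N. sqrt (G N)) \<longlonglongrightarrow> 0" by simp
qed

lemma relpow_gf:
  fixes TT :: "real \<Rightarrow> complex poly \<Rightarrow> complex poly"
  assumes CT: "\<And>i X. i \<in> I \<Longrightarrow> C X \<Longrightarrow> C (TT (r i) X)"
    and CP: "\<And>i. i \<in> I \<Longrightarrow> C (P i)"
    and Rrel: "\<And>Q. (\<forall>i\<in>I. C (Q i)) \<Longrightarrow> R (gf I r Q) (gf I r (\<lambda>i. TT (r i) (Q i)))"
  shows "(R ^^ m) (gf I r P) (gf I r (\<lambda>i. (TT (r i) ^^ m) (P i)))"
proof (induction m)
  case 0 then show ?case by simp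
next
  case (Suc m)
  have C: "\<forall>i\<in>I. C ((TT (r i) ^^ m) (P i))"
  proof
    fix i assume i: "i \<in> I"
    show "C ((TT (r i) ^^ m) (P i))" by (induction m) (auto intro: CT[OF i] CP[OF i])
  qed
  have X: "R (gf I r (\<lambda>i. (TT (r i) ^^ m) (P i))) (gf I r (\<lambda>i. (TT (r i) ^^ Suc m) (P i)))"
    using Rrel[OF C] by simp
  show ?case unfolding relpowp.simps
    by (rule relcomppI[of "R ^^ m" _ _ R, OF Suc.IH X])
qed


lemma series_gf:
  fixes TT :: "real \<Rightarrow> complex poly \<Rightarrow> complex poly" and lamf :: "'i \<Rightarrow> complex"
  assumes fin: "finite I" and rp: "\<forall>i\<in>I. r i > 0"
    and op: "\<And>i. i \<in> I \<Longrightarrow> opT (TT (r i)) C (Hop (s\<^sup>2) (r i)) (lamf i) mu s"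
    and CP: "\<And>i. i \<in> I \<Longrightarrow> C (P i)"
    and Rrel: "\<And>Q. (\<forall>i\<in>I. C (Q i)) \<Longrightarrow> R (gf I r Q) (gf I r (\<lambda>i. TT (r i) (Q i)))"
    and se: "s = sqrt e"
  shows "series_op R e (gf I r P) (gf I r (\<lambda>i. smult (- complex_of_real (1/s)) (opT.Lim (TT (r i)) s (P i))))"
  unfolding series_op_def
proof (intro exI conjI allI)
  let ?u = "\<lambda>n. gf I r (\<lambda>i. (TT (r i) ^^ (2*n+1)) (P i))"
  let ?L = "gf I r (\<lambda>i. opT.Lim (TT (r i)) s (P i))"
  show "(R ^^ (2*n+1)) (gf I r P) (?u n)" for n
    by (rule relpow_gf[where C=C]) (auto intro: opT.C_T[OF op] CP Rrel)
  show "L2 ?L" by (rule L2_gf[OF fin rp])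
  show "L2 (gf I r (\<lambda>i. smult (- complex_of_real (1/s)) (opT.Lim (TT (r i)) s (P i))))" by (rule L2_gf[OF fin rp])
  show "AE x in lborel. gf I r (\<lambda>i. smult (- complex_of_real (1/s)) (opT.Lim (TT (r i)) s (P i))) x = - complex_of_real (1 / sqrt e) * ?L x"
    by (rule AE_I2) (simp add: gf_smult gf_minus se)
  define E where "E N i = opT.Ap (TT (r i)) s N (P i) - opT.Lim (TT (r i)) s (P i)" for N i
  have fe: "(\<lambda>x. (\<Sum>n\<le>N. complex_of_real ((-1)^n / real (2*n+1) * s^(2*n+1)) * ?u n x) - ?L x) = gf I r (E N)" for N
  proof -
    have "gf I r (\<lambda>i. opT.Ap (TT (r i)) s N (P i)) = gf I r (\<lambda>i. \<Sum>n\<le>N. smult (complex_of_real ((-1)^n / real (2*n+1) * s^(2*n+1))) ((TT (r i) ^^ (2*n+1)) (P i)))"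
      unfolding gf_def by (intro ext sum.cong refl) (simp only: opT.Ap_def[OF op] opT.cc_def[OF op])
    then show ?thesis unfolding E_def by (simp add: fun_eq_iff gf_diff gf_sum gf_smult)
  qed
  define d where "d = (\<Sum>i\<in>I. degree (P i))"
  have dP: "i \<in> I \<Longrightarrow> degree (P i) \<le> d" for i using fin by (auto simp: d_def intro: member_le_sum)
  have "(\<lambda>N. L2norm (gf I r (E N))) \<longlonglongrightarrow> 0"
  proof (rule L2norm_gf_tendsto[OF fin rp])
    fix N i assume i: "i \<in> I"
    have "degree (E N i) \<le> max (degree (opT.Ap (TT (r i)) s N (P i))) (degree (opT.Lim (TT (r i)) s (P i)))"
      unfolding E_def by (rule degree_diff_le_max)
    also have "\<dots> \<le> degree (P i)"
      using opT.degree_Ap[OF op[OF i] CP[OF i], of N] opT.degree_Lim[OF op[OF i], of "P i"] by simp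
    finally show "degree (E N i) \<le> d" using dP[OF i] by simp
  next
    fix i k assume i: "i \<in> I"
    have "(\<lambda>N. coeff (opT.Ap (TT (r i)) s N (P i)) k - coeff (opT.Lim (TT (r i)) s (P i)) k) \<longlonglongrightarrow> coeff (opT.Lim (TT (r i)) s (P i)) k - coeff (opT.Lim (TT (r i)) s (P i)) k"
      by (intro tendsto_intros opT.conv[OF op[OF i] CP[OF i]])
    then show "(\<lambda>N. coeff (E N i) k) \<longlonglongrightarrow> 0" by (simp add: E_def)
  qed
  then show "(\<lambda>N. L2norm (\<lambda>x. (\<Sum>n\<le>N. complex_of_real ((-1)^n / real (2*n+1) * (sqrt e)^(2*n+1)) * ?u n x) - ?L x)) \<longlonglongrightarrow> 0"
    unfolding se[symmetric] by (simp only: fe)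
qed


lemma evenp_monom: "evenp (monom c (2*n))" by (auto simp: evenp_def coeff_monom)
lemma oddp_monom: "oddp (monom c (2*n+1))" by (auto simp: oddp_def coeff_monom)
lemma oddp_monom': "oddp (monom c (Suc (2*n)))" using oddp_monom by simp

theorem lemma4p1:
  fixes \<epsilon> :: real
  assumes "0 < \<epsilon>" and "\<epsilon> \<le> 1"
  shows "(\<forall>f\<in>M_eps0 \<epsilon>. \<exists>Sf hSf hf Shf.
            S_eps \<epsilon> f Sf \<and> h_eps \<epsilon> Sf hSf \<and> h_eps \<epsilon> f hf \<and> S_eps \<epsilon> hf Shf \<and>
            (AE x in lborel. hSf x - Shf x = - \<i> * f x))
       \<and> (\<forall>f\<in>M_eps1 \<epsilon>. \<exists>Sf hSf hf Shf.
            S_star_eps \<epsilon> f Sf \<and> h_eps \<epsilon> Sf hSf \<and> h_eps \<epsilon> f hf \<and> S_star_eps \<epsilon> hf Shf \<and>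
            (AE x in lborel. hSf x - Shf x = - \<i> * f x))"
proof -
  define s where "s = sqrt \<epsilon>"
  have s: "s > 0" "s\<^sup>2 = \<epsilon>" using assms by (auto simp: s_def)
  define k where "k = - complex_of_real (1/s)"
  have kis: "k * \<i> * complex_of_real s = - \<i>" using s by (simp add: k_def field_simps)
  show ?thesis
  proof (intro conjI ballI)
    fix f assume "f \<in> M_eps0 \<epsilon>"
    then obtain F c where F: "finite F" "\<forall>(n,\<alpha>)\<in>F. 0 < \<alpha> \<and> \<alpha> < 1"
      and f: "f = (\<lambda>x. \<Sum>(n,\<alpha>)\<in>F. c (n,\<alpha>) * complex_of_real (x^(2*n) * exp (- \<alpha> * x\<^sup>2 / (2 * sqrt \<epsilon>))))"
      unfolding M_eps0_def by blast
    define r :: "nat \<times> real \<Rightarrow> real" where "r = (\<lambda>(n, \<alpha>). \<alpha> / (2 * s))"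
    define P :: "nat \<times> real \<Rightarrow> complex poly" where "P = (\<lambda>(n, \<alpha>). monom (c (n,\<alpha>)) (2*n))"
    have rp: "\<forall>i\<in>F. r i > 0" using F(2) s by (auto simp: r_def)
    have ra: "\<forall>i\<in>F. 2 * r i * s < 1" using F(2) s by (auto simp: r_def)
    have fgf: "f = gf F r P"
      unfolding f gf_def
    proof (rule ext, rule sum.cong[OF refl])
      fix x i assume "i \<in> F"
      obtain n \<alpha> where i: "i = (n, \<alpha>)" by force
      have "- \<alpha> * x\<^sup>2 / (2 * sqrt \<epsilon>) = - (\<alpha> / (2 * s)) * x\<^sup>2" by (simp add: s_def)
      then show "(case i of (n, \<alpha>) \<Rightarrow> c (n,\<alpha>) * complex_of_real (x^(2*n) * exp (- \<alpha> * x\<^sup>2 / (2 * sqrt \<epsilon>)))) = gterm (r i) (P i) x"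
        by (simp add: i r_def P_def gterm_def poly_monom)
    qed
    have op: "\<And>i. i \<in> F \<Longrightarrow> opT (Tev (r i)) evenp (Hop (s\<^sup>2) (r i)) (\<i> * complex_of_real (2 * r i)) (\<lambda>k. - \<i> * of_nat (k+2)) s"
      using rp ra s by (intro opT_ev) auto
    have CP: "\<And>i. i \<in> F \<Longrightarrow> evenp (P i)" by (auto simp: P_def evenp_monom split: prod.split)
    have CHP: "\<And>i. i \<in> F \<Longrightarrow> evenp (Hop \<epsilon> (r i) (P i))" by (intro evenp_Hop CP)
    have Rrel: "\<And>Q. \<forall>i\<in>F. evenp (Q i) \<Longrightarrow> t_op (gf F r Q) (gf F r (\<lambda>i. Tev (r i) (Q i)))"
      by (rule t_op_gf[OF F(1) rp])
    define Lm where "Lm i X = opT.Lim (Tev (r i)) s X" for i X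
    define Sf where "Sf = gf F r (\<lambda>i. smult k (Lm i (P i)))"
    define hf where "hf = gf F r (\<lambda>i. Hop \<epsilon> (r i) (P i))"
    define hSf where "hSf = gf F r (\<lambda>i. Hop \<epsilon> (r i) (smult k (Lm i (P i))))"
    define Shf where "Shf = gf F r (\<lambda>i. smult k (Lm i (Hop \<epsilon> (r i) (P i))))"
    have S1: "S_eps \<epsilon> f Sf"
      unfolding S_eps_def fgf Sf_def k_def Lm_def
      by (intro conjI L2_even_gf[OF F(1) rp] series_gf[where TT=Tev and C=evenp and R=t_op and lamf="\<lambda>i. \<i> * complex_of_real (2 * r i)" and mu="\<lambda>k. - \<i> * of_nat (k+2)" and s=s, OF F(1) rp op CP Rrel s_def]) (use CP in auto)
    have S2: "S_eps \<epsilon> hf Shf"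
      unfolding S_eps_def hf_def Shf_def k_def Lm_def
      by (intro conjI L2_even_gf[OF F(1) rp] series_gf[where TT=Tev and C=evenp and R=t_op and lamf="\<lambda>i. \<i> * complex_of_real (2 * r i)" and mu="\<lambda>k. - \<i> * of_nat (k+2)" and s=s, OF F(1) rp op CHP Rrel s_def]) (use CHP in auto)
    have H1: "h_eps \<epsilon> Sf hSf" unfolding Sf_def hSf_def by (rule h_eps_gf[OF F(1) rp])
    have H2: "h_eps \<epsilon> f hf" unfolding fgf hf_def by (rule h_eps_gf[OF F(1) rp])
    have "hSf x - Shf x = - \<i> * f x" for x
    proof -
      have "hSf x - Shf x = gf F r (\<lambda>i. smult k (Hop \<epsilon> (r i) (Lm i (P i)) - Lm i (Hop \<epsilon> (r i) (P i)))) x"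
        unfolding hSf_def Shf_def gf_diff[symmetric] by (simp add: Hop_smult smult_diff_right)
      also have "\<dots> = gf F r (\<lambda>i. smult k (smult (\<i> * complex_of_real s) (P i))) x"
        unfolding gf_def
      proof (rule sum.cong[OF refl])
        fix i assume i: "i \<in> F"
        show "gterm (r i) (smult k (Hop \<epsilon> (r i) (Lm i (P i)) - Lm i (Hop \<epsilon> (r i) (P i)))) x = gterm (r i) (smult k (smult (\<i> * complex_of_real s) (P i))) x"
          using opT.comm_lim[OF op[OF i] CP[OF i]] s(2) by (simp add: Lm_def)
      qed
      also have "\<dots> = - \<i> * f x" by (simp add: gf_smult gf_minus fgf kis mult.assoc[symmetric])
      finally show ?thesis .
    qed
    then have "AE x in lborel. hSf x - Shf x = - \<i> * f x" by simp
    with S1 S2 H1 H2 show "\<exists>Sf hSf hf Shf. S_eps \<epsilon> f Sf \<and> h_eps \<epsilon> Sf hSf \<and> h_eps \<epsilon> f hf \<and> S_eps \<epsilon> hf Shf \<and>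
            (AE x in lborel. hSf x - Shf x = - \<i> * f x)" by blast
  next
    fix f assume "f \<in> M_eps1 \<epsilon>"
    then obtain F c where F: "finite F" "\<forall>(n,\<alpha>)\<in>F. 0 < \<alpha> \<and> \<alpha> < 1"
      and f: "f = (\<lambda>x. \<Sum>(n,\<alpha>)\<in>F. c (n,\<alpha>) * complex_of_real (x^(2*n+1) * exp (- \<alpha> * x\<^sup>2 / (2 * sqrt \<epsilon>))))"
      unfolding M_eps1_def by blast
    define r :: "nat \<times> real \<Rightarrow> real" where "r = (\<lambda>(n, \<alpha>). \<alpha> / (2 * s))"
    define P :: "nat \<times> real \<Rightarrow> complex poly" where "P = (\<lambda>(n, \<alpha>). monom (c (n,\<alpha>)) (2*n+1))"
    have rp: "\<forall>i\<in>F. r i > 0" using F(2) s by (auto simp: r_def)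
    have ra: "\<forall>i\<in>F. 2 * r i * s < 1" using F(2) s by (auto simp: r_def)
    have fgf: "f = gf F r P"
      unfolding f gf_def
    proof (rule ext, rule sum.cong[OF refl])
      fix x i assume "i \<in> F"
      obtain n \<alpha> where i: "i = (n, \<alpha>)" by force
      have "- \<alpha> * x\<^sup>2 / (2 * sqrt \<epsilon>) = - (\<alpha> / (2 * s)) * x\<^sup>2" by (simp add: s_def)
      then show "(case i of (n, \<alpha>) \<Rightarrow> c (n,\<alpha>) * complex_of_real (x^(2*n+1) * exp (- \<alpha> * x\<^sup>2 / (2 * sqrt \<epsilon>)))) = gterm (r i) (P i) x"
        by (simp add: i r_def P_def gterm_def poly_monom)
    qed
    have op: "\<And>i. i \<in> F \<Longrightarrow> opT (Tod (r i)) oddp (Hop (s\<^sup>2) (r i)) (\<i> * complex_of_real (2 * r i)) (\<lambda>k. - \<i> * of_nat (k+1)) s"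
      using rp ra s by (intro opT_od) auto
    have CP: "\<And>i. i \<in> F \<Longrightarrow> oddp (P i)" by (auto simp: P_def oddp_monom' split: prod.split)
    have CHP: "\<And>i. i \<in> F \<Longrightarrow> oddp (Hop \<epsilon> (r i) (P i))" by (intro oddp_Hop CP)
    have Rrel: "\<And>Q. \<forall>i\<in>F. oddp (Q i) \<Longrightarrow> t_adj (gf F r Q) (gf F r (\<lambda>i. Tod (r i) (Q i)))"
      by (rule t_adj_gf[OF F(1) rp])
    define Lm where "Lm i X = opT.Lim (Tod (r i)) s X" for i X
    define Sf where "Sf = gf F r (\<lambda>i. smult k (Lm i (P i)))"
    define hf where "hf = gf F r (\<lambda>i. Hop \<epsilon> (r i) (P i))"
    define hSf where "hSf = gf F r (\<lambda>i. Hop \<epsilon> (r i) (smult k (Lm i (P i))))"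
    define Shf where "Shf = gf F r (\<lambda>i. smult k (Lm i (Hop \<epsilon> (r i) (P i))))"
    have S1: "S_star_eps \<epsilon> f Sf"
      unfolding S_star_eps_def fgf Sf_def k_def Lm_def
      by (intro conjI L2_odd_gf[OF F(1) rp] series_gf[where TT=Tod and C=oddp and R=t_adj and lamf="\<lambda>i. \<i> * complex_of_real (2 * r i)" and mu="\<lambda>k. - \<i> * of_nat (k+1)" and s=s, OF F(1) rp op CP Rrel s_def]) (use CP in auto)
    have S2: "S_star_eps \<epsilon> hf Shf"
      unfolding S_star_eps_def hf_def Shf_def k_def Lm_def
      by (intro conjI L2_odd_gf[OF F(1) rp] series_gf[where TT=Tod and C=oddp and R=t_adj and lamf="\<lambda>i. \<i> * complex_of_real (2 * r i)" and mu="\<lambda>k. - \<i> * of_nat (k+1)" and s=s, OF F(1) rp op CHP Rrel s_def]) (use CHP in auto)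
    have H1: "h_eps \<epsilon> Sf hSf" unfolding Sf_def hSf_def by (rule h_eps_gf[OF F(1) rp])
    have H2: "h_eps \<epsilon> f hf" unfolding fgf hf_def by (rule h_eps_gf[OF F(1) rp])
    have "hSf x - Shf x = - \<i> * f x" for x
    proof -
      have "hSf x - Shf x = gf F r (\<lambda>i. smult k (Hop \<epsilon> (r i) (Lm i (P i)) - Lm i (Hop \<epsilon> (r i) (P i)))) x"
        unfolding hSf_def Shf_def gf_diff[symmetric] by (simp add: Hop_smult smult_diff_right)
      also have "\<dots> = gf F r (\<lambda>i. smult k (smult (\<i> * complex_of_real s) (P i))) x"
        unfolding gf_def
      proof (rule sum.cong[OF refl])
        fix i assume i: "i \<in> F"
        show "gterm (r i) (smult k (Hop \<epsilon> (r i) (Lm i (P i)) - Lm i (Hop \<epsilon> (r i) (P i)))) x = gterm (r i) (smult k (smult (\<i> * complex_of_real s) (P i))) x"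
          using opT.comm_lim[OF op[OF i] CP[OF i]] s(2) by (simp add: Lm_def)
      qed
      also have "\<dots> = - \<i> * f x" by (simp add: gf_smult gf_minus fgf kis mult.assoc[symmetric])
      finally show ?thesis .
    qed
    then have "AE x in lborel. hSf x - Shf x = - \<i> * f x" by simp
    with S1 S2 H1 H2 show "\<exists>Sf hSf hf Shf. S_star_eps \<epsilon> f Sf \<and> h_eps \<epsilon> Sf hSf \<and> h_eps \<epsilon> f hf \<and> S_star_eps \<epsilon> hf Shf \<and>
            (AE x in lborel. hSf x - Shf x = - \<i> * f x)" by blast
  qed
qed


end
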